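(* Let $1\le J\le\omega$, let $\mathcal K_j$ ($j\in J$) be Fraïssé classes of finite ordered relational structures each having the Ramsey property, and let $\langle\mathbf A_k:k<\omega\rangle$ be a generating sequence for them. Then the triple $(\mathcal R(\langle\mathbf A_k:k<\omega\rangle),\le,r)$ is closed as a subspace of $\mathcal{AR}^{\mathbb N}$ (with $\mathcal{AR}$ discrete, identifying $B$ with $(r_n(B))_{n<\omega}$), satisfies Todorcevic's axioms A.1–A.4, and hence is a topological Ramsey space: every subset of $\mathcal R$ with the property of Baire in the Ellentuck topology is Ramsey, and every Ellentuck-meager subset is Ramsey null.
   Context: Ordered relational structures: an ordered relational signature is $L=\{<\}\cup\{R_i\}_{i\in I}$ ($I$ countable, $R_i$ of arity $n(i)$). An $L$-structure $\mathbf A$ has a nonempty universe $|\mathbf A|$, a linear order $<^{\mathbf A}$ on it and relations $R_i^{\mathbf A}\subseteq|\mathbf A|^{n(i)}$; $\|\mathbf A\|$ denotes the cardinality of $|\mathbf A|$, whose elements are enumerated increasingly as $a^0<a^1<\dots$. An embedding is an injection preserving and reflecting $<$ and every $R_i$; $\mathbf A\le\mathbf B$ means $\mathbf A$ embeds into $\mathbf B$; a substructure is the image of an identity embedding; $\cong$ is isomorphism. A Fraïssé class of finite ordered relational structures is a class of finite $L$-structures closed under embeddable structures, with the joint embedding and amalgamation properties, countably many isomorphism types, and structures of arbitrarily large finite size. For $\mathbf A\le\mathbf B$, $\binom{\mathbf B}{\mathbf A}$ is the set of substructures of $\mathbf B$ isomorphic to $\mathbf A$; for finite sequences, $\binom{(\mathbf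 B_j)_{j\in J}}{(\mathbf A_j)_{j\in J}}$ is the set of sequences $(\mathbf D_j)_{j\in J}$ with each $\mathbf D_j\in\binom{\mathbf B_j}{\mathbf A_j}$. $\mathcal K$ has the Ramsey property if for all $\mathbf A\le\mathbf B$ in $\mathcal K$ and $k\ge2$ there is $\mathbf C\in\mathcal K$ such that every $k$-coloring of $\binom{\mathbf C}{\mathbf A}$ admits $\mathbf B'\in\binom{\mathbf C}{\mathbf B}$ with $\binom{\mathbf B'}{\mathbf A}$ monochromatic. $(\mathbf C_j)_{j\in J}\to((\mathbf B_j)_{j\in J})^{(\mathbf A_j)_{j\in J}}$ means every 2-coloring of $\binom{(\mathbf C_j)}{(\mathbf A_j)}$ admits $(\mathbf B'_j)\in\binom{(\mathbf C_j)}{(\mathbf B_j)}$ with $\binom{(\mathbf B'_j)}{(\mathbf A_j)}$ monochromatic. Generating sequence: given $1\le J\le\omega$ and classes $\mathcal K_j$ ($j\in J$), put $J_k=J$ if $J<\omega$ and $J_k=k+1$ if $J=\omega$. A generating sequence is $\langle\mathbf A_k:k<\omega\rangle$ with $\mathbf A_k=(\mathbf A_{k,j})_{j\in J_k}$, $\mathbf A_{k,j}\in\mathcal K_j$, such that (1) $\|\mathbf A_{0,j}\|=1$ for $j\in J_0$; (2) $\mathbf A_{k,j}$ is a substructure of $\mathbf A_{k+1,j}$ for $j\in J_k$; (3) for every $j\in J$ and $\mathbf B\in\mathcal K_j$ there is $k$ with $\mathbf B\le\mathbf A_{k,j}$; (4) for all $k<m$ there is $n>m$ with $(\mathbf A_{n,j})_{j\in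 J_k}\to((\mathbf A_{m,j})_{j\in J_k})^{(\mathbf A_{k,j})_{j\in J_k}}$. The space $\mathcal R=\mathcal R(\langle\mathbf A_k\rangle)$: members are $B=\langle\langle n_k,\mathbf B_k\rangle:k<\omega\rangle$ with $(n_k)$ strictly increasing and $\mathbf B_k=(\mathbf B_{k,j})_{j\in J_k}$, $\mathbf B_{k,j}\in\binom{\mathbf A_{n_k,j}}{\mathbf A_{k,j}}$; $B(k)=\langle n_k,\mathbf B_k\rangle$ is the $k$-th block, $\mathcal R(k)=\{B(k):B\in\mathcal R\}$; the top element is $\mathbb A=\langle\langle k,\mathbf A_k\rangle:k<\omega\rangle$. $r_n(B)=\langle B(0),\dots,B(n-1)\rangle$, $\mathcal{AR}_n=\{r_n(B):B\in\mathcal R\}$, $\mathcal{AR}=\bigcup_n\mathcal{AR}_n$. For $C=\langle\langle n_k,\mathbf C_k\rangle\rangle$, $B=\langle\langle m_k,\mathbf B_k\rangle\rangle$: $C\le B$ iff for each $k$ there is $l_k$ with $n_k=m_{l_k}$ and $\mathbf C_{k,j}\in\binom{\mathbf B_{l_k,j}}{\mathbf A_{k,j}}$ for all $j\in J_k$. For $c\in\mathcal{AR}_q$, $b\in\mathcal{AR}_p$: $c\le_{\rm fin}b$ iff there are $C\le B$ with $c=r_q(C)$, $b=r_p(B)$ and every block depth of $c$ is a block depth of $b$. Topological Ramsey space: $[a,B]=\{A\in\mathcal R:A\le B,\ \exists n\ r_n(A)=a\}$; these sets form a base of the Ellentuck topology on $\mathcal R$. $\mathcal X\subseteq\mathcal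 R$ is Ramsey if for every nonempty $[a,A]$ there is $B\in[a,A]$ with $[a,B]\subseteq\mathcal X$ or $[a,B]\cap\mathcal X=\emptyset$; Ramsey null if always the latter can be achieved. *)

theory Defs
  imports "HOL-Analysis.Analysis" "HOL-Library.Sublist"
begin

text \<open>An ordered relational signature is given by a set I of relation indices together with an
  arity function ar.  The strict linear order is the field lt; rel i is the interpretation of R_i.\<close>

record ostr =
  univ :: "nat set"
  lt :: "(nat \<times> nat) set"
  rel :: "nat \<Rightarrow> nat list set"

definition wf_str :: "ostr \<Rightarrow> bool" where
  "wf_str A \<longleftrightarrow> univ A \<noteq> {} \<and> lt A \<subseteq> univ A \<times> univ A
     \<and> strict_linear_order_on (univ A) (lt A) \<and> (\<forall>i. rel A i \<subseteq> lists (univ A))"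

definition is_Lstr :: "nat set \<Rightarrow> (nat \<Rightarrow> nat) \<Rightarrow> ostr \<Rightarrow> bool" where
  "is_Lstr I ar A \<longleftrightarrow> wf_str A \<and> (\<forall>i. i \<notin> I \<longrightarrow> rel A i = {})
     \<and> (\<forall>i\<in>I. \<forall>xs\<in>rel A i. length xs = ar i)"

definition embedding :: "(nat \<Rightarrow> nat) \<Rightarrow> ostr \<Rightarrow> ostr \<Rightarrow> bool" where
  "embedding f A B \<longleftrightarrow> inj_on f (univ A) \<and> f ` univ A \<subseteq> univ B
     \<and> (\<forall>x\<in>univ A. \<forall>y\<in>univ A. (x, y) \<in> lt A \<longleftrightarrow> (f x, f y) \<in> lt B)
     \<and> (\<forall>i. \<forall>xs\<in>lists (univ A). xs \<in> rel A i \<longleftrightarrow> map f xs \<in> rel B i)"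

definition embeds :: "ostr \<Rightarrow> ostr \<Rightarrow> bool" where
  "embeds A B \<longleftrightarrow> (\<exists>f. embedding f A B)"

definition isomorphic :: "ostr \<Rightarrow> ostr \<Rightarrow> bool" where
  "isomorphic A B \<longleftrightarrow> (\<exists>f. embedding f A B \<and> f ` univ A = univ B)"

definition substructure :: "ostr \<Rightarrow> ostr \<Rightarrow> bool" where
  "substructure D B \<longleftrightarrow> wf_str D \<and> univ D \<subseteq> univ B \<and> embedding id D B"

definition binom :: "ostr \<Rightarrow> ostr \<Rightarrow> ostr set" where
  "binom B A = {D. substructure D B \<and> isomorphic D A}"

definition fraisse_class :: "nat set \<Rightarrow> (nat \<Rightarrow> nat) \<Rightarrow> ostr set \<Rightarrow> bool" where
  "fraisse_class I ar K \<longleftrightarrow>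
     (\<forall>A\<in>K. is_Lstr I ar A \<and> finite (univ A))
   \<and> (\<forall>A B. B \<in> K \<longrightarrow> wf_str A \<longrightarrow> finite (univ A) \<longrightarrow> embeds A B \<longrightarrow> A \<in> K)
   \<and> (\<forall>A\<in>K. \<forall>B\<in>K. \<exists>C\<in>K. embeds A C \<and> embeds B C)
   \<and> (\<forall>A\<in>K. \<forall>B\<in>K. \<forall>C\<in>K. \<forall>f g. embedding f A B \<longrightarrow> embedding g A C \<longrightarrow>
        (\<exists>D\<in>K. \<exists>f' g'. embedding f' B D \<and> embedding g' C D
            \<and> (\<forall>x\<in>univ A. f' (f x) = g' (g x))))
   \<and> (\<exists>S. countable S \<and> S \<subseteq> K \<and> (\<forall>A\<in>K. \<exists>B\<in>S. isomorphic A B))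
   \<and> (\<forall>n. \<exists>A\<in>K. card (univ A) \<ge> n)"

definition ramsey_property :: "ostr set \<Rightarrow> bool" where
  "ramsey_property K \<longleftrightarrow>
     (\<forall>A\<in>K. \<forall>B\<in>K. embeds A B \<longrightarrow> (\<forall>k::nat. k \<ge> 2 \<longrightarrow>
        (\<exists>C\<in>K. \<forall>(col :: ostr \<Rightarrow> nat). (\<forall>D\<in>binom C A. col D < k) \<longrightarrow>
           (\<exists>B'\<in>binom C B. \<exists>c. \<forall>D\<in>binom B' A. col D = c))))"

text \<open>Sequences of structures indexed by j < N, represented as lists of length N.\<close>
definition seq_binom :: "nat \<Rightarrow> (nat \<Rightarrow> ostr) \<Rightarrow> (nat \<Rightarrow> ostr) \<Rightarrow> ostr list set" where
  "seq_binom N C A = {Ds. length Ds = N \<and> (\<forall>j<N. Ds ! j \<in> binom (C j) (A j))}"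

definition arrow :: "nat \<Rightarrow> (nat \<Rightarrow> ostr) \<Rightarrow> (nat \<Rightarrow> ostr) \<Rightarrow> (nat \<Rightarrow> ostr) \<Rightarrow> bool" where
  "arrow N C B A \<longleftrightarrow> (\<forall>(col :: ostr list \<Rightarrow> bool).
      \<exists>Bs\<in>seq_binom N C B. \<exists>c. \<forall>Ds\<in>seq_binom N (\<lambda>j. Bs ! j) A. col Ds = c)"

text \<open>J :: enat with 1 \<le> J \<le> \<omega> (\<omega> = \<infinity>).  Jk J k is J_k.\<close>
definition Jk :: "enat \<Rightarrow> nat \<Rightarrow> nat" where
  "Jk J k = (case J of enat m \<Rightarrow> m | \<infinity> \<Rightarrow> Suc k)"

definition generating_seq ::
  "enat \<Rightarrow> (nat \<Rightarrow> ostr set) \<Rightarrow> (nat \<Rightarrow> nat \<Rightarrow> ostr) \<Rightarrow> bool" where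
  "generating_seq J K A \<longleftrightarrow>
     (\<forall>k. \<forall>j<Jk J k. A k j \<in> K j)
   \<and> (\<forall>j<Jk J 0. card (univ (A 0 j)) = 1)
   \<and> (\<forall>k. \<forall>j<Jk J k. substructure (A k j) (A (Suc k) j))
   \<and> (\<forall>j. enat j < J \<longrightarrow> (\<forall>B\<in>K j. \<exists>k. j < Jk J k \<and> embeds B (A k j)))
   \<and> (\<forall>k m. k < m \<longrightarrow> (\<exists>n>m. arrow (Jk J k) (A n) (A m) (A k)))"

type_synonym block = "nat \<times> ostr list"
type_synonym seqR = "nat \<Rightarrow> block"

definition RR :: "enat \<Rightarrow> (nat \<Rightarrow> nat \<Rightarrow> ostr) \<Rightarrow> seqR set" where
  "RR J A = {B. strict_mono (\<lambda>k. fst (B k))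
     \<and> (\<forall>k. length (snd (B k)) = Jk J k
          \<and> (\<forall>j<Jk J k. snd (B k) ! j \<in> binom (A (fst (B k)) j) (A k j)))}"

definition top_elem :: "enat \<Rightarrow> (nat \<Rightarrow> nat \<Rightarrow> ostr) \<Rightarrow> seqR" where
  "top_elem J A = (\<lambda>k. (k, map (A k) [0..<Jk J k]))"

definition rn :: "nat \<Rightarrow> seqR \<Rightarrow> block list" where
  "rn n B = map B [0..<n]"

definition ARn :: "enat \<Rightarrow> (nat \<Rightarrow> nat \<Rightarrow> ostr) \<Rightarrow> nat \<Rightarrow> block list set" where
  "ARn J A n = {rn n B | B. B \<in> RR J A}"

definition AR :: "enat \<Rightarrow> (nat \<Rightarrow> nat \<Rightarrow> ostr) \<Rightarrow> block list set" where
  "AR J A = (\<Union>n. ARn J A n)"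

definition leR :: "enat \<Rightarrow> (nat \<Rightarrow> nat \<Rightarrow> ostr) \<Rightarrow> seqR \<Rightarrow> seqR \<Rightarrow> bool" where
  "leR J A C B \<longleftrightarrow> (\<forall>k. \<exists>l. fst (C k) = fst (B l)
      \<and> (\<forall>j<Jk J k. snd (C k) ! j \<in> binom (snd (B l) ! j) (A k j)))"

definition le_fin :: "enat \<Rightarrow> (nat \<Rightarrow> nat \<Rightarrow> ostr) \<Rightarrow> block list \<Rightarrow> block list \<Rightarrow> bool" where
  "le_fin J A c b \<longleftrightarrow> (\<exists>C B. C \<in> RR J A \<and> B \<in> RR J A \<and> leR J A C B
      \<and> c = rn (length c) C \<and> b = rn (length b) B \<and> fst ` set c \<subseteq> fst ` set b)"

definition basic :: "enat \<Rightarrow> (nat \<Rightarrow> nat \<Rightarrow> ostr) \<Rightarrow> block list \<Rightarrow> seqR \<Rightarrow> seqR set" where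
  "basic J A a B = {X \<in> RR J A. leR J A X B \<and> (\<exists>n. rn n X = a)}"

definition ellentuck :: "enat \<Rightarrow> (nat \<Rightarrow> nat \<Rightarrow> ostr) \<Rightarrow> seqR topology" where
  "ellentuck J A = topology_generated_by {basic J A a B | a B. a \<in> AR J A \<and> B \<in> RR J A}"

definition ramsey_set :: "enat \<Rightarrow> (nat \<Rightarrow> nat \<Rightarrow> ostr) \<Rightarrow> seqR set \<Rightarrow> bool" where
  "ramsey_set J A X \<longleftrightarrow> (\<forall>a B. B \<in> RR J A \<longrightarrow> basic J A a B \<noteq> {} \<longrightarrow>
     (\<exists>C\<in>basic J A a B. basic J A a C \<subseteq> X \<or> basic J A a C \<inter> X = {}))"

definition ramsey_null :: "enat \<Rightarrow> (nat \<Rightarrow> nat \<Rightarrow> ostr) \<Rightarrow> seqR set \<Rightarrow> bool" where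
  "ramsey_null J A X \<longleftrightarrow> (\<forall>a B. B \<in> RR J A \<longrightarrow> basic J A a B \<noteq> {} \<longrightarrow>
     (\<exists>C\<in>basic J A a B. basic J A a C \<inter> X = {}))"

definition nowhere_dense_in :: "'a topology \<Rightarrow> 'a set \<Rightarrow> bool" where
  "nowhere_dense_in T S \<longleftrightarrow> S \<subseteq> topspace T \<and> T interior_of (T closure_of S) = {}"

definition meager_in :: "'a topology \<Rightarrow> 'a set \<Rightarrow> bool" where
  "meager_in T S \<longleftrightarrow> (\<exists>F. countable F \<and> (\<forall>N\<in>F. nowhere_dense_in T N) \<and> S \<subseteq> \<Union>F)"

definition baire_property_in :: "'a topology \<Rightarrow> 'a set \<Rightarrow> bool" where
  "baire_property_in T S \<longleftrightarrow> S \<subseteq> topspace T \<and>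
     (\<exists>U. openin T U \<and> meager_in T ((S - U) \<union> (U - S)))"

definition depth_finite :: "enat \<Rightarrow> (nat \<Rightarrow> nat \<Rightarrow> ostr) \<Rightarrow> seqR \<Rightarrow> block list \<Rightarrow> bool" where
  "depth_finite J A B a \<longleftrightarrow> (\<exists>n. le_fin J A a (rn n B))"

definition depth :: "enat \<Rightarrow> (nat \<Rightarrow> nat \<Rightarrow> ostr) \<Rightarrow> seqR \<Rightarrow> block list \<Rightarrow> nat" where
  "depth J A B a = (LEAST n. le_fin J A a (rn n B))"

definition axiom_A1 :: "enat \<Rightarrow> (nat \<Rightarrow> nat \<Rightarrow> ostr) \<Rightarrow> bool" where
  "axiom_A1 J A \<longleftrightarrow>
     (\<forall>X\<in>RR J A. rn 0 X = [])
   \<and> (\<forall>X\<in>RR J A. \<forall>Y\<in>RR J A. X \<noteq> Y \<longrightarrow> (\<exists>n. rn n X \<noteq> rn n Y))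
   \<and> (\<forall>X\<in>RR J A. \<forall>Y\<in>RR J A. \<forall>n m. rn n X = rn m Y \<longrightarrow>
        n = m \<and> (\<forall>i<n. rn i X = rn i Y))"

definition axiom_A2 :: "enat \<Rightarrow> (nat \<Rightarrow> nat \<Rightarrow> ostr) \<Rightarrow> bool" where
  "axiom_A2 J A \<longleftrightarrow>
     (\<forall>a\<in>AR J A. le_fin J A a a)
   \<and> (\<forall>a\<in>AR J A. \<forall>b\<in>AR J A. \<forall>c\<in>AR J A. le_fin J A a b \<longrightarrow> le_fin J A b c \<longrightarrow> le_fin J A a c)
   \<and> (\<forall>b\<in>AR J A. finite {a. le_fin J A a b})
   \<and> (\<forall>X\<in>RR J A. \<forall>Y\<in>RR J A. leR J A X Y \<longleftrightarrow> (\<forall>n. \<exists>m. le_fin J A (rn n X) (rn m Y)))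
   \<and> (\<forall>a\<in>AR J A. \<forall>b\<in>AR J A. \<forall>c\<in>AR J A. prefix a b \<longrightarrow> le_fin J A b c \<longrightarrow>
        (\<exists>d. prefix d c \<and> le_fin J A a d))"

definition axiom_A3 :: "enat \<Rightarrow> (nat \<Rightarrow> nat \<Rightarrow> ostr) \<Rightarrow> bool" where
  "axiom_A3 J A \<longleftrightarrow>
     (\<forall>a\<in>AR J A. \<forall>B\<in>RR J A. depth_finite J A B a \<longrightarrow>
        (\<forall>X\<in>basic J A (rn (depth J A B a) B) B. basic J A a X \<noteq> {}))
   \<and> (\<forall>a\<in>AR J A. \<forall>X\<in>RR J A. \<forall>B\<in>RR J A. leR J A X B \<longrightarrow> basic J A a X \<noteq> {} \<longrightarrow>
        (\<exists>X'\<in>basic J A (rn (depth J A B a) B) B.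
            basic J A a X' \<noteq> {} \<and> basic J A a X' \<subseteq> basic J A a X))"

definition axiom_A4 :: "enat \<Rightarrow> (nat \<Rightarrow> nat \<Rightarrow> ostr) \<Rightarrow> bool" where
  "axiom_A4 J A \<longleftrightarrow>
     (\<forall>a\<in>AR J A. \<forall>B\<in>RR J A. \<forall>Ob. depth_finite J A B a \<longrightarrow> Ob \<subseteq> ARn J A (Suc (length a)) \<longrightarrow>
        (\<exists>X\<in>basic J A (rn (depth J A B a) B) B.
            rn (Suc (length a)) ` basic J A a X \<subseteq> Ob
          \<or> rn (Suc (length a)) ` basic J A a X \<subseteq> - Ob))"

end

theory Submission
  imports Defs
begin

definition restr :: "ostr \<Rightarrow> nat set \<Rightarrow> ostr" where
 "restr D S = \<lparr>univ = S, lt = lt D \<inter> (S \<times> S), rel = (\<lambda>i. rel D i \<inter> lists S)\<rparr>"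

lemma wf_restr: assumes "wf_str D" "S \<subseteq> univ D" "S \<noteq> {}" shows "wf_str (restr D S)"
proof -
  have "strict_linear_order_on (univ D) (lt D)" using assms(1) by (simp add: wf_str_def)
  hence t: "trans (lt D)" "irrefl (lt D)" "total_on (univ D) (lt D)"
    by (auto simp: strict_linear_order_on_def)
  have "trans (lt D \<inter> S \<times> S)" using t(1) unfolding trans_def by blast
  moreover have "irrefl (lt D \<inter> S \<times> S)" using t(2) unfolding irrefl_def by blast
  moreover have "total_on S (lt D \<inter> S \<times> S)" using t(3) assms(2) unfolding total_on_def by blast
  ultimately show ?thesis using assms unfolding wf_str_def restr_def strict_linear_order_on_def
    by auto
qed

lemma substr_restr: "wf_str D \<Longrightarrow> S \<subseteq> univ D \<Longrightarrow> S \<noteq> {} \<Longrightarrow> substructure (restr D S) D"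
  unfolding substructure_def
  using wf_restr[of D S] by (auto simp: embedding_def restr_def)

lemma embedding_comp: assumes "embedding f A B" "embedding g B C" shows "embedding (g \<circ> f) A C"
proof -
  have i: "inj_on f (univ A)" "f ` univ A \<subseteq> univ B" "inj_on g (univ B)" "g ` univ B \<subseteq> univ C"
    using assms by (auto simp: embedding_def)
  have "inj_on (g \<circ> f) (univ A)" using i by (metis comp_inj_on inj_on_subset)
  moreover have "(g \<circ> f) ` univ A \<subseteq> univ C" using i by auto
  moreover have "\<forall>x\<in>univ A. \<forall>y\<in>univ A. (x, y) \<in> lt A \<longleftrightarrow> ((g \<circ> f) x, (g \<circ> f) y) \<in> lt C"
    using assms i unfolding embedding_def by (simp add: image_subset_iff)
  moreover have "\<forall>i. \<forall>xs\<in>lists (univ A). xs \<in> rel A i \<longleftrightarrow> map (g \<circ> f) xs \<in> rel C i"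
  proof (intro allI ballI)
    fix i xs assume xs: "xs \<in> lists (univ A)"
    hence "map f xs \<in> lists (univ B)" using i by (auto simp: image_subset_iff)
    thus "xs \<in> rel A i \<longleftrightarrow> map (g \<circ> f) xs \<in> rel C i" using assms xs unfolding embedding_def
      by simp
  qed
  ultimately show ?thesis unfolding embedding_def by blast
qed

lemma substr_emb: "substructure D B \<Longrightarrow> embedding id D B"
  by (simp add: substructure_def)

lemma substr_trans: assumes "substructure D E" "substructure E F" shows "substructure D F"
proof -
  have "embedding (id \<circ> id) D F" using assms embedding_comp substr_emb by blast
  thus ?thesis using assms unfolding substructure_def by auto
qed

lemma iso_inv: assumes "isomorphic D X" shows "\<exists>h. embedding h X D \<and> h ` univ X = univ D"
proof -
  obtain f where f: "embedding f D X" "f ` univ D = univ X" using assms by (auto simp: isomorphic_def)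
  define h where "h = inv_into (univ D) f"
  have inj: "inj_on f (univ D)" using f by (simp add: embedding_def)
  have bij: "bij_betw f (univ D) (univ X)" using inj f(2) by (simp add: bij_betw_def)
  have bh: "bij_betw h (univ X) (univ D)" unfolding h_def using bij by (rule bij_betw_inv_into)
  have fh: "\<And>y. y \<in> univ X \<Longrightarrow> f (h y) = y" unfolding h_def using f(2) by (simp add: f_inv_into_f)
  have hX: "\<And>y. y \<in> univ X \<Longrightarrow> h y \<in> univ D" using bh by (auto simp: bij_betw_def)
  have "embedding h X D"
    unfolding embedding_def
  proof (intro conjI allI ballI)
    show "inj_on h (univ X)" using bh by (simp add: bij_betw_def)
    show "h ` univ X \<subseteq> univ D" using bh by (simp add: bij_betw_def)
    fix x y assume "x \<in> univ X" "y \<in> univ X"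
    thus "(x, y) \<in> lt X \<longleftrightarrow> (h x, h y) \<in> lt D" using f(1) hX fh unfolding embedding_def by metis
  next
    fix i xs assume xs: "xs \<in> lists (univ X)"
    hence hxs: "map h xs \<in> lists (univ D)" using hX by auto
    have "map f (map h xs) = xs" using xs fh by (induct xs) auto
    thus "xs \<in> rel X i \<longleftrightarrow> map h xs \<in> rel D i" using f(1) hxs unfolding embedding_def by metis
  qed
  moreover have "h ` univ X = univ D" using bh by (simp add: bij_betw_def)
  ultimately show ?thesis by blast
qed

lemma copy_binom: assumes "embedding g Y D" "wf_str Y" "wf_str D"
  shows "restr D (g ` univ Y) \<in> binom D Y"
proof -
  let ?S = "g ` univ Y"
  have S: "?S \<subseteq> univ D" "?S \<noteq> {}" using assms by (auto simp: embedding_def wf_str_def)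
  have sub: "substructure (restr D ?S) D" using substr_restr[OF assms(3) S] .
  define f where "f = inv_into (univ Y) g"
  have inj: "inj_on g (univ Y)" using assms(1) by (simp add: embedding_def)
  have bij: "bij_betw g (univ Y) ?S" using inj by (simp add: bij_betw_def)
  have bf: "bij_betw f ?S (univ Y)" unfolding f_def using bij by (rule bij_betw_inv_into)
  have gf: "\<And>y. y \<in> ?S \<Longrightarrow> g (f y) = y" unfolding f_def by (simp add: f_inv_into_f)
  have fS: "\<And>y. y \<in> ?S \<Longrightarrow> f y \<in> univ Y" using bf by (auto simp: bij_betw_def)
  have "embedding f (restr D ?S) Y"
    unfolding embedding_def
  proof (intro conjI allI ballI)
    show "inj_on f (univ (restr D ?S))" using bf by (simp add: bij_betw_def restr_def)
    show "f ` univ (restr D ?S) \<subseteq> univ Y" using bf by (simp add: bij_betw_def restr_def)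
    fix x y assume xy: "x \<in> univ (restr D ?S)" "y \<in> univ (restr D ?S)"
    hence xy': "x \<in> ?S" "y \<in> ?S" by (auto simp: restr_def)
    have "(f x, f y) \<in> lt Y \<longleftrightarrow> (g (f x), g (f y)) \<in> lt D" using assms(1) fS xy' unfolding embedding_def by blast
    thus "(x, y) \<in> lt (restr D ?S) \<longleftrightarrow> (f x, f y) \<in> lt Y" using gf xy' by (simp add: restr_def)
  next
    fix i xs assume xs: "xs \<in> lists (univ (restr D ?S))"
    hence xs': "xs \<in> lists ?S" by (simp add: restr_def)
    hence fxs: "map f xs \<in> lists (univ Y)" using fS by auto
    have "map g (map f xs) = xs" using xs' gf by (induct xs) auto
    hence "map f xs \<in> rel Y i \<longleftrightarrow> xs \<in> rel D i" using assms(1) fxs unfolding embedding_def by metis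
    thus "xs \<in> rel (restr D ?S) i \<longleftrightarrow> map f xs \<in> rel Y i" using xs' by (simp add: restr_def)
  qed
  moreover have "f ` univ (restr D ?S) = univ Y" using bf by (simp add: bij_betw_def restr_def)
  ultimately have "isomorphic (restr D ?S) Y" unfolding isomorphic_def by blast
  thus ?thesis using sub by (simp add: binom_def)
qed

lemma binom_trans: "D \<in> binom E Y \<Longrightarrow> substructure E F \<Longrightarrow> D \<in> binom F Y"
  unfolding binom_def using substr_trans by blast

lemma binom_trans2: "D \<in> binom E Y \<Longrightarrow> E \<in> binom F X \<Longrightarrow> D \<in> binom F Y"
  unfolding binom_def using substr_trans by blast

lemma substr_wf: "substructure D E \<Longrightarrow> wf_str D"
  by (simp add: substructure_def)

lemma subcopy: assumes "isomorphic D X" "substructure Y X" "wf_str D"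
  shows "\<exists>E. E \<in> binom D Y"
proof -
  obtain h where h: "embedding h X D" using iso_inv[OF assms(1)] by blast
  have "embedding (h \<circ> id) Y D" using embedding_comp[OF substr_emb[OF assms(2)] h] .
  thus ?thesis using copy_binom assms substr_wf by blast
qed

lemma substr_eq_restr: assumes "substructure D F" shows "D = restr F (univ D)"
proof -
  have w: "wf_str D" "univ D \<subseteq> univ F" "embedding id D F" using assms by (auto simp: substructure_def)
  have lt: "lt D = lt F \<inter> (univ D \<times> univ D)" using w unfolding wf_str_def embedding_def by auto
  have rel: "rel D i = rel F i \<inter> lists (univ D)" for i
  proof -
    have a: "rel D i \<subseteq> lists (univ D)" using w(1) by (simp add: wf_str_def)
    have b: "\<forall>xs\<in>lists (univ D). xs \<in> rel D i \<longleftrightarrow> xs \<in> rel F i" using w(3) by (simp add: embedding_def)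
    show ?thesis using a b by blast
  qed
  show ?thesis unfolding restr_def using lt rel by (intro ostr.equality) (auto intro!: ext)
qed

lemma finite_substrs: assumes "finite (univ F)" shows "finite {D. substructure D F}"
proof -
  have "{D. substructure D F} \<subseteq> restr F ` Pow (univ F)"
    using substr_eq_restr by (auto simp: substructure_def)
  thus ?thesis using assms by (meson finite_Pow_iff finite_imageI finite_subset)
qed

lemma finite_binom: "finite (univ F) \<Longrightarrow> finite (binom F Y)"
  unfolding binom_def by (rule finite_subset[OF _ finite_substrs]) auto



lemma Jk_mono: "k \<le> l \<Longrightarrow> Jk J k \<le> Jk J l"
  by (cases J) (auto simp: Jk_def)

lemma substr_refl: "wf_str D \<Longrightarrow> substructure D D"
  by (auto simp: substructure_def embedding_def)

lemma iso_trans: assumes "isomorphic D X" "isomorphic X Y" shows "isomorphic D Y"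
proof -
  obtain f g where "embedding f D X" "f ` univ D = univ X" "embedding g X Y" "g ` univ X = univ Y"
    using assms by (auto simp: isomorphic_def)
  thus ?thesis unfolding isomorphic_def using embedding_comp by (metis image_comp)
qed

lemma iso_sym: "isomorphic D X \<Longrightarrow> isomorphic X D"
  using iso_inv unfolding isomorphic_def by blast

lemma binom_iso: "D \<in> binom E X \<Longrightarrow> isomorphic X Y \<Longrightarrow> D \<in> binom E Y"
  unfolding binom_def using iso_trans by blast

locale gs =
  fixes J :: enat and A :: "nat \<Rightarrow> nat \<Rightarrow> ostr"
  assumes wfA: "\<And>k j. j < Jk J k \<Longrightarrow> wf_str (A k j)"
  and finA: "\<And>k j. j < Jk J k \<Longrightarrow> finite (univ (A k j))"
  and subA: "\<And>k j. j < Jk J k \<Longrightarrow> substructure (A k j) (A (Suc k) j)"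
  and arrA: "\<And>k m. k < m \<Longrightarrow> \<exists>n>m. arrow (Jk J k) (A n) (A m) (A k)"
begin

abbreviation "R \<equiv> RR J A"
abbreviation "leq \<equiv> leR J A"
abbreviation "bs \<equiv> basic J A"

definition valid :: "nat \<Rightarrow> block \<Rightarrow> bool" where
  "valid k c \<longleftrightarrow> length (snd c) = Jk J k \<and> (\<forall>j<Jk J k. snd c ! j \<in> binom (A (fst c) j) (A k j))"

definition subb :: "nat \<Rightarrow> block \<Rightarrow> block \<Rightarrow> bool" where
  "subb k c e \<longleftrightarrow> fst c = fst e \<and> (\<forall>j<Jk J k. snd c ! j \<in> binom (snd e ! j) (A k j))"

lemma RR_iff: "B \<in> R \<longleftrightarrow> strict_mono (\<lambda>k. fst (B k)) \<and> (\<forall>k. valid k (B k))"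
  by (auto simp: RR_def valid_def)

lemma leR_iff: "leq C B \<longleftrightarrow> (\<forall>k. \<exists>l. subb k (C k) (B l))"
  by (simp add: leR_def subb_def)

lemma A_chain: "k \<le> l \<Longrightarrow> j < Jk J k \<Longrightarrow> substructure (A k j) (A l j)"
proof (induction l rule: dec_induct)
  case base thus ?case using wfA substr_refl by blast
next
  case (step m)
  have "j < Jk J m" using step Jk_mono[of k m J] by auto
  thus ?case using step subA substr_trans by blast
qed

lemma valid_wf: "valid k c \<Longrightarrow> j < Jk J k \<Longrightarrow> wf_str (snd c ! j)"
  unfolding valid_def binom_def substructure_def by auto

lemma subb_valid: assumes "valid l e" "subb k c e" "length (snd c) = Jk J k" "k \<le> l"
  shows "valid k c"
  unfolding valid_def
proof (intro conjI allI impI)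
  fix j assume j: "j < Jk J k"
  hence jl: "j < Jk J l" using Jk_mono[OF assms(4), of J] by auto
  have "snd e ! j \<in> binom (A (fst e) j) (A l j)" using assms(1) jl by (simp add: valid_def)
  hence "substructure (snd e ! j) (A (fst e) j)" by (simp add: binom_def)
  thus "snd c ! j \<in> binom (A (fst c) j) (A k j)" using assms(2) j binom_trans by (auto simp: subb_def)
qed (use assms in auto)

lemma subb_refl: "valid k c \<Longrightarrow> subb k c c"
  unfolding subb_def binom_def
proof (intro conjI allI impI, simp_all)
  fix j assume "valid k c" "j < Jk J k"
  thus "substructure (snd c ! j) (snd c ! j) \<and> isomorphic (snd c ! j) (A k j)"
    using valid_wf substr_refl unfolding valid_def binom_def by blast
qed

lemma subb_trans: assumes "subb k c d" "subb m d e" "k \<le> m" shows "subb k c e"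
  unfolding subb_def
proof (intro conjI allI impI)
  show "fst c = fst e" using assms by (simp add: subb_def)
  fix j assume j: "j < Jk J k"
  hence "j < Jk J m" using Jk_mono[OF assms(3), of J] by auto
  thus "snd c ! j \<in> binom (snd e ! j) (A k j)" using assms j binom_trans2 unfolding subb_def by blast
qed

lemma copy_block: assumes "valid l e" "k \<le> l" shows "\<exists>c. valid k c \<and> subb k c e"
proof -
  have ex: "\<exists>E. E \<in> binom (snd e ! j) (A k j)" if j: "j < Jk J k" for j
  proof -
    have jl: "j < Jk J l" using Jk_mono[OF assms(2), of J] j by auto
    have "snd e ! j \<in> binom (A (fst e) j) (A l j)" using assms(1) jl by (simp add: valid_def)
    hence "isomorphic (snd e ! j) (A l j)" "wf_str (snd e ! j)" by (auto simp: binom_def substructure_def)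
    thus ?thesis using subcopy A_chain[OF assms(2) j] by blast
  qed
  define c where "c = (fst e, map (\<lambda>j. SOME E. E \<in> binom (snd e ! j) (A k j)) [0..<Jk J k])"
  have "subb k c e" unfolding subb_def c_def using ex by (auto intro: someI_ex)
  moreover have "length (snd c) = Jk J k" by (simp add: c_def)
  ultimately show ?thesis using subb_valid assms by blast
qed

lemma sm_ge: "strict_mono (f :: nat \<Rightarrow> nat) \<Longrightarrow> k \<le> f k"
  by (simp add: strict_mono_imp_increasing)

lemma RR_fst_inj: "B \<in> R \<Longrightarrow> fst (B l) = fst (B l') \<longleftrightarrow> l = l'"
  unfolding RR_iff using strict_mono_eq by metis

lemma RR_fst_less: "B \<in> R \<Longrightarrow> fst (B l) < fst (B l') \<longleftrightarrow> l < l'"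
  unfolding RR_iff using strict_mono_less by metis

lemma RR_fst_le: "B \<in> R \<Longrightarrow> fst (B l) \<le> fst (B l') \<longleftrightarrow> l \<le> l'"
  unfolding RR_iff using strict_mono_less_eq by metis

lemma leR_index: assumes "C \<in> R" "B \<in> R" "leq C B"
  shows "\<exists>ix. strict_mono ix \<and> (\<forall>k. subb k (C k) (B (ix k)))"
proof -
  have "\<forall>k. \<exists>l. subb k (C k) (B l)" using assms(3) leR_iff by blast
  then obtain ix where ix: "\<And>k. subb k (C k) (B (ix k))" by metis
  have "strict_mono ix"
  proof (rule strict_monoI)
    fix x y :: nat assume "x < y"
    hence "fst (C x) < fst (C y)" using assms(1) unfolding RR_iff by (metis strict_monoD)
    hence "fst (B (ix x)) < fst (B (ix y))" using ix by (simp add: subb_def)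
    thus "ix x < ix y" using RR_fst_less[OF assms(2)] by blast
  qed
  thus ?thesis using ix by blast
qed

lemma subb_index_ge: assumes "C \<in> R" "B \<in> R" "leq C B" "subb k (C k) (B l)" shows "k \<le> l"
proof -
  obtain ix where ix: "strict_mono ix" "\<And>k. subb k (C k) (B (ix k))" using leR_index assms by blast
  have "fst (B l) = fst (B (ix k))" using ix(2) assms(4) by (simp add: subb_def)
  hence "l = ix k" using RR_fst_inj[OF assms(2)] by blast
  thus ?thesis using sm_ge[OF ix(1)] by simp
qed

lemma leR_refl: "B \<in> R \<Longrightarrow> leq B B"
  unfolding leR_iff using subb_refl RR_iff by blast

lemma leR_trans: assumes "C \<in> R" "B \<in> R" "D \<in> R" "leq C B" "leq B D" shows "leq C D"
  unfolding leR_iff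
proof
  fix k
  obtain l where l: "subb k (C k) (B l)" using assms(4) leR_iff by blast
  obtain m where m: "subb l (B l) (D m)" using assms(5) leR_iff by blast
  have "k \<le> l" using subb_index_ge assms l by blast
  thus "\<exists>m. subb k (C k) (D m)" using subb_trans l m by blast
qed

lemma rn_length[simp]: "length (rn n B) = n"
  by (simp add: rn_def)

lemma rn_nth[simp]: "k < n \<Longrightarrow> rn n B ! k = B k"
  by (simp add: rn_def)

lemma rn_eq_iff: "rn n B = rn n C \<longleftrightarrow> (\<forall>k<n. B k = C k)"
  by (auto simp: rn_def)

lemma rn_eq_mono: "rn n B = rn n C \<Longrightarrow> m \<le> n \<Longrightarrow> rn m B = rn m C"
  by (auto simp: rn_eq_iff)

lemma basic_iff: "Y \<in> bs a X \<longleftrightarrow> Y \<in> R \<and> leq Y X \<and> rn (length a) Y = a"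
proof
  assume "Y \<in> bs a X"
  then obtain n where "Y \<in> R" "leq Y X" "rn n Y = a" by (auto simp: basic_def)
  moreover have "n = length a" using \<open>rn n Y = a\<close> by auto
  ultimately show "Y \<in> R \<and> leq Y X \<and> rn (length a) Y = a" by simp
qed (auto simp: basic_def)

end


context gs begin

lemma RR_fst_mono: "B \<in> R \<Longrightarrow> k < l \<Longrightarrow> fst (B k) < fst (B l)"
  using RR_fst_less by blast

lemma ext_lemma: assumes B: "B \<in> R" and C0: "C0 \<in> R" and sub: "\<forall>k<p. \<exists>l<N. subb k (C0 k) (B l)"
  shows "\<exists>C\<in>R. rn p C = rn p C0 \<and> leq C B \<and> (\<forall>k\<ge>p. \<exists>l\<ge>N. subb k (C k) (B l))"
proof -
  define cp where "cp k e = (SOME c. valid k c \<and> subb k c e)" for k e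
  have cpv: "valid k (cp k (B (N + k))) \<and> subb k (cp k (B (N + k))) (B (N + k))" for k
  proof -
    have "valid (N + k) (B (N + k))" using B by (simp add: RR_iff)
    hence "\<exists>c. valid k c \<and> subb k c (B (N + k))" using copy_block by simp
    thus ?thesis unfolding cp_def by (rule someI_ex)
  qed
  define C where "C k = (if k < p then C0 k else cp k (B (N + k)))" for k
  have val: "valid k (C k)" for k
    using cpv C0 by (auto simp: C_def RR_iff)
  have fstC: "fst (C k) = fst (B (N + k))" if "k \<ge> p" for k
    using cpv[of k] that by (auto simp: C_def subb_def)
  have "fst (C k) < fst (C (Suc k))" for k
  proof (cases "Suc k < p")
    case True thus ?thesis using C0 RR_fst_mono by (simp add: C_def)
  next
    case False
    show ?thesis
    proof (cases "k < p")
      case True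
      hence kp: "Suc k = p" using False by simp
      obtain l where l: "l < N" "subb k (C0 k) (B l)" using sub True by blast
      have "fst (C k) = fst (B l)" using l True by (simp add: C_def subb_def)
      moreover have "fst (C (Suc k)) = fst (B (N + Suc k))" using fstC kp by simp
      moreover have "fst (B l) < fst (B (N + Suc k))" using RR_fst_mono[OF B] l by simp
      ultimately show ?thesis by simp
    next
      case False
      thus ?thesis using fstC RR_fst_mono[OF B] by simp
    qed
  qed
  hence "strict_mono (\<lambda>k. fst (C k))" by (simp add: strict_mono_Suc_iff)
  hence CR: "C \<in> R" using val by (simp add: RR_iff)
  have "rn p C = rn p C0" by (simp add: rn_eq_iff C_def)
  moreover have "\<forall>k\<ge>p. \<exists>l\<ge>N. subb k (C k) (B l)"
    using cpv by (auto simp: C_def intro!: exI[of _ "N + _"])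
  moreover have "leq C B"
    unfolding leR_iff
  proof
    fix k show "\<exists>l. subb k (C k) (B l)"
      using sub cpv by (cases "k < p") (auto simp: C_def)
  qed
  ultimately show ?thesis using CR by blast
qed

lemma leR_mono_seq: assumes "\<forall>n. Bs n \<in> R" "\<forall>n. leq (Bs (Suc n)) (Bs n)" "n \<le> m"
  shows "leq (Bs m) (Bs n)"
  using assms(3)
proof (induction m rule: dec_induct)
  case base thus ?case using assms leR_refl by blast
next
  case (step m) thus ?case using assms leR_trans by blast
qed

lemma fusion: assumes R: "\<forall>n. Bs n \<in> R" and le: "\<forall>n. leq (Bs (Suc n)) (Bs n)"
  and ag: "\<forall>n. rn (c + n) (Bs (Suc n)) = rn (c + n) (Bs n)"
  shows "\<exists>L\<in>R. \<forall>n. leq L (Bs n) \<and> rn (c + n) L = rn (c + n) (Bs n)"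
proof -
  have agr: "Bs m k = Bs n k" if "n \<le> m" "k < c + n" for m n k
    using that(1)
  proof (induction m rule: dec_induct)
    case (step m)
    have "k < c + m" using that step by simp
    thus ?case using ag step by (auto simp: rn_eq_iff)
  qed simp
  define L where "L k = Bs (Suc k) k" for k
  have Lm: "L k = Bs m k" if "Suc k \<le> m" for k m
    using agr[OF that, of k] by (simp add: L_def)
  have "fst (L k) < fst (L (Suc k))" for k
  proof -
    have "L k = Bs (Suc (Suc k)) k" using Lm by simp
    moreover have "L (Suc k) = Bs (Suc (Suc k)) (Suc k)" by (simp add: L_def)
    ultimately show ?thesis using RR_fst_mono R by simp
  qed
  hence "strict_mono (\<lambda>k. fst (L k))" by (simp add: strict_mono_Suc_iff)
  moreover have "valid k (L k)" for k using R by (simp add: L_def RR_iff)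
  ultimately have LR: "L \<in> R" by (simp add: RR_iff)
  have "leq L (Bs n)" for n
    unfolding leR_iff
  proof
    fix k
    have "L k = Bs (max n (Suc k)) k" using Lm by simp
    moreover have "leq (Bs (max n (Suc k))) (Bs n)" using leR_mono_seq[OF R le] by simp
    ultimately show "\<exists>l. subb k (L k) (Bs n l)" using leR_iff by metis
  qed
  moreover have "rn (c + n) L = rn (c + n) (Bs n)" for n
    unfolding rn_eq_iff
  proof (intro allI impI)
    fix k assume k: "k < c + n"
    have "L k = Bs (max n (Suc k)) k" using Lm by simp
    also have "\<dots> = Bs n k" using agr[of n "max n (Suc k)" k] k by simp
    finally show "L k = Bs n k" .
  qed
  ultimately show ?thesis using LR by blast
qed

definition fitsat :: "block list \<Rightarrow> seqR \<Rightarrow> nat \<Rightarrow> bool" where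
  "fitsat b Y e \<longleftrightarrow> bs b Y \<noteq> {} \<and> (if b = [] then e = 0 else 0 < e \<and> fst (last b) = fst (Y (e - 1)))"

lemma last_rn: "b \<noteq> [] \<Longrightarrow> rn (length b) Z = b \<Longrightarrow> last b = Z (length b - 1)"
  by (metis last_conv_nth length_greater_0_conv diff_less less_numeral_extra(1) rn_length rn_nth)

lemma fits_blocks: assumes Y: "Y \<in> R" and Z: "Z \<in> bs b Y" and f: "fitsat b Y e" and k: "k < length b"
  shows "\<exists>l<e. subb k (Z k) (Y l)"
proof -
  have ZR: "Z \<in> R" "leq Z Y" "rn (length b) Z = b" using Z basic_iff by auto
  obtain l where l: "subb k (Z k) (Y l)" using ZR(2) leR_iff by blast
  have ne: "b \<noteq> []" using k by auto
  have lb: "last b = Z (length b - 1)" using last_rn[OF ne ZR(3)] .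
  have "fst (Z k) \<le> fst (Z (length b - 1))" using RR_fst_le[OF ZR(1)] k by simp
  hence "fst (Y l) \<le> fst (Y (e - 1))" using l f ne lb by (simp add: fitsat_def subb_def)
  hence "l \<le> e - 1" using RR_fst_le[OF Y] by blast
  moreover have "0 < e" using f ne by (simp add: fitsat_def)
  ultimately show ?thesis using l by (intro exI[of _ l]) auto
qed

lemma fitsat_exists: assumes Y: "Y \<in> R" and ne: "bs b Y \<noteq> {}" shows "\<exists>e. fitsat b Y e"
proof (cases "b = []")
  case True thus ?thesis using ne by (simp add: fitsat_def)
next
  case False
  obtain Z where Z: "Z \<in> bs b Y" using ne by blast
  have ZR: "Z \<in> R" "leq Z Y" "rn (length b) Z = b" using Z basic_iff by auto
  obtain l where l: "subb (length b - 1) (Z (length b - 1)) (Y l)" using ZR(2) leR_iff by blast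
  have "last b = Z (length b - 1)" using last_rn[OF False ZR(3)] .
  hence "fst (last b) = fst (Y (Suc l - 1))" using l by (simp add: subb_def)
  thus ?thesis using False ne by (intro exI[of _ "Suc l"]) (simp add: fitsat_def)
qed

lemma A3_1c: assumes Y: "Y \<in> R" and f: "fitsat b Y e" and X: "X \<in> R" "leq X Y" "rn e X = rn e Y"
  shows "fitsat b X e"
proof -
  obtain Z where Z: "Z \<in> bs b Y" using f by (auto simp: fitsat_def)
  have ZR: "Z \<in> R" "leq Z Y" "rn (length b) Z = b" using Z basic_iff by auto
  have "\<forall>k<length b. \<exists>l<e. subb k (Z k) (X l)"
    using fits_blocks[OF Y Z f] X(3) unfolding rn_eq_iff by metis
  then obtain C where C: "C \<in> R" "rn (length b) C = rn (length b) Z" "leq C X"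
    using ext_lemma[OF X(1) ZR(1)] by blast
  hence "C \<in> bs b X" using ZR by (simp add: basic_iff)
  moreover have "e > 0 \<Longrightarrow> X (e - 1) = Y (e - 1)" using X(3) by (auto simp: rn_eq_iff)
  ultimately show ?thesis using f by (auto simp: fitsat_def)
qed

lemma A3_2c: assumes Y: "Y \<in> R" and f: "fitsat b Y e" and X: "X \<in> R" "leq X Y" and ne: "bs b X \<noteq> {}"
  shows "\<exists>X'\<in>R. leq X' Y \<and> rn e X' = rn e Y \<and> fitsat b X' e \<and> bs b X' \<subseteq> bs b X"
proof -
  define X' where "X' k = (if k < e then Y k else X k)" for k
  obtain ix where ix: "strict_mono ix" "\<And>k. subb k (X k) (Y (ix k))" using leR_index X Y by blast
  have fX: "fst (X k) = fst (Y (ix k))" for k using ix by (simp add: subb_def)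
  have "fst (X' k) < fst (X' (Suc k))" for k
  proof -
    consider "Suc k < e" | "Suc k = e" | "k \<ge> e" by linarith
    thus ?thesis
    proof cases
      case 1 thus ?thesis using RR_fst_mono[OF Y] by (simp add: X'_def)
    next
      case 2
      have "k < ix (Suc k)" using sm_ge[OF ix(1), of "Suc k"] by simp
      thus ?thesis using 2 RR_fst_mono[OF Y] fX by (simp add: X'_def)
    next
      case 3 thus ?thesis using RR_fst_mono[OF X(1)] by (simp add: X'_def)
    qed
  qed
  hence "strict_mono (\<lambda>k. fst (X' k))" by (simp add: strict_mono_Suc_iff)
  moreover have "valid k (X' k)" for k using X Y by (simp add: X'_def RR_iff)
  ultimately have X'R: "X' \<in> R" by (simp add: RR_iff)
  have le: "leq X' Y"
    unfolding leR_iff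
  proof
    fix k show "\<exists>l. subb k (X' k) (Y l)"
    proof (cases "k < e")
      case True
      have "subb k (Y k) (Y k)" using subb_refl Y by (simp add: RR_iff)
      thus ?thesis using True by (auto simp: X'_def)
    next
      case False thus ?thesis using ix(2) by (auto simp: X'_def)
    qed
  qed
  have rne: "rn e X' = rn e Y" by (simp add: rn_eq_iff X'_def)
  have sub: "bs b X' \<subseteq> bs b X"
  proof
    fix W assume W: "W \<in> bs b X'"
    have WR: "W \<in> R" "leq W X'" "rn (length b) W = b" using W basic_iff by auto
    obtain V where V: "V \<in> bs b X" using ne by blast
    have VR: "V \<in> R" "leq V X" "rn (length b) V = b" using V basic_iff by auto
    have "leq W X"
      unfolding leR_iff
    proof
      fix k
      obtain l where l: "subb k (W k) (X' l)" using WR(2) leR_iff by blast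
      show "\<exists>l. subb k (W k) (X l)"
      proof (cases "l < e")
        case False thus ?thesis using l by (auto simp: X'_def)
      next
        case le: True
        show ?thesis
        proof (cases "k < length b")
          case True
          hence "W k = V k" using WR(3) VR(3) by (metis rn_nth)
          thus ?thesis using VR(2) leR_iff by metis
        next
          case False
          have bne: "b \<noteq> []" using f le by (auto simp: fitsat_def)
          have lb: "last b = W (length b - 1)" using last_rn[OF bne WR(3)] .
          have "length b - 1 < k" using False bne by (cases b) auto
          hence "fst (W (length b - 1)) < fst (W k)" using RR_fst_mono[OF WR(1)] by blast
          hence "fst (Y (e - 1)) < fst (Y l)"
            using lb f bne l le by (simp add: fitsat_def subb_def X'_def)
          hence "e - 1 < l" using RR_fst_less[OF Y] by blast
          thus ?thesis using le by simp
        qed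
      qed
    qed
    thus "W \<in> bs b X" using WR by (simp add: basic_iff)
  qed
  have "fitsat b X' e" using A3_1c[OF Y f X'R le rne] .
  thus ?thesis using X'R le rne sub by blast
qed

end


lemma restr_restr: "S \<subseteq> T \<Longrightarrow> restr (restr D T) S = restr D S"
  by (auto simp: restr_def)

lemma univ_restr[simp]: "univ (restr D S) = S"
  by (simp add: restr_def)

lemma emb_substr: "substructure Y X \<Longrightarrow> embedding h X E \<Longrightarrow> embedding h Y E"
  using embedding_comp[OF substr_emb] by (metis comp_id)

context gs begin

lemma mono_block:
  fixes Q :: "block \<Rightarrow> bool"
  assumes e0: "valid l e0" and pm: "p < m" and nm: "m < n" and arr: "arrow (Jk J p) (A n) (A m) (A p)"
    and nl: "n \<le> l"
  shows "\<exists>M col. valid m M \<and> subb m M e0 \<and> (\<forall>c. valid p c \<longrightarrow> subb p c M \<longrightarrow> Q c = col)"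
proof -
  define E where "E j = snd e0 ! j" for j
  have Jpm: "Jk J p \<le> Jk J m" "Jk J m \<le> Jk J n" "Jk J n \<le> Jk J l" using pm nm nl Jk_mono by auto
  have Ewf: "wf_str (E j)" if "j < Jk J l" for j using valid_wf[OF e0 that] by (simp add: E_def)
  have Eb: "E j \<in> binom (A (fst e0) j) (A l j)" if "j < Jk J l" for j using e0 that by (simp add: valid_def E_def)
  have hex: "\<exists>h. embedding h (A n j) (E j)" if j: "j < Jk J n" for j
  proof -
    have jl: "j < Jk J l" using j Jpm by simp
    have "isomorphic (E j) (A l j)" using Eb[OF jl] by (simp add: binom_def)
    then obtain g where "embedding g (A l j) (E j)" using iso_inv by blast
    thus ?thesis using emb_substr A_chain[OF nl j] by blast
  qed
  define h where "h j = (SOME h. embedding h (A n j) (E j))" for j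
  have hemb: "embedding (h j) (A n j) (E j)" if "j < Jk J n" for j
    using hex[OF that] unfolding h_def by (rule someI_ex)
  define im where "im j S = restr (E j) (h j ` S)" for j S
  define colf where "colf (Ds :: ostr list) = Q (fst e0, map (\<lambda>j. im j (univ (Ds ! j))) [0..<Jk J p])" for Ds
  obtain Bs c0 where Bs: "Bs \<in> seq_binom (Jk J p) (A n) (A m)"
    and mono: "\<forall>Ds\<in>seq_binom (Jk J p) (\<lambda>j. Bs ! j) (A p). colf Ds = c0"
    using arr unfolding arrow_def by blast
  have Bsj: "Bs ! j \<in> binom (A n j) (A m j)" if "j < Jk J p" for j using Bs that by (simp add: seq_binom_def)
  have Bsub: "substructure (Bs ! j) (A n j)" if "j < Jk J p" for j using Bsj[OF that] by (simp add: binom_def)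
  have imB: "im j (univ (Bs ! j)) \<in> binom (E j) (Bs ! j)" if j: "j < Jk J p" for j
  proof -
    have jn: "j < Jk J n" "j < Jk J l" using j Jpm by auto
    have "embedding (h j) (Bs ! j) (E j)" using emb_substr[OF Bsub[OF j] hemb[OF jn(1)]] .
    thus ?thesis unfolding im_def using copy_binom substr_wf[OF Bsub[OF j]] Ewf[OF jn(2)] by blast
  qed
  have cex: "\<exists>F. F \<in> binom (E j) (A m j)" if j: "j < Jk J m" for j
  proof -
    have jl: "j < Jk J l" using j Jpm by simp
    have "isomorphic (E j) (A l j)" using Eb[OF jl] by (simp add: binom_def)
    thus ?thesis using subcopy A_chain[of m l j] j Ewf[OF jl] nm nl by simp
  qed
  define M where "M = (fst e0, map (\<lambda>j. if j < Jk J p then im j (univ (Bs ! j))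
       else (SOME F. F \<in> binom (E j) (A m j))) [0..<Jk J m])"
  have Mj: "snd M ! j = im j (univ (Bs ! j))" if "j < Jk J p" for j
    using that Jpm by (simp add: M_def)
  have sub: "subb m M e0"
    unfolding subb_def
  proof (intro conjI allI impI)
    show "fst M = fst e0" by (simp add: M_def)
    fix j assume j: "j < Jk J m"
    show "snd M ! j \<in> binom (snd e0 ! j) (A m j)"
    proof (cases "j < Jk J p")
      case True
      have "isomorphic (Bs ! j) (A m j)" using Bsj[OF True] by (simp add: binom_def)
      thus ?thesis using imB[OF True] binom_iso Mj[OF True] by (simp add: E_def)
    next
      case False
      thus ?thesis using j someI_ex[OF cex[OF j]] by (simp add: M_def E_def)
    qed
  qed
  have val: "valid m M" using subb_valid[OF e0 sub] nm nl by (simp add: M_def)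
  have "Q c = c0" if c: "valid p c" "subb p c M" for c
  proof -
    define cj where "cj j = snd c ! j" for j
    have cjb: "cj j \<in> binom (im j (univ (Bs ! j))) (A p j)" if "j < Jk J p" for j
      using c(2) that Mj by (simp add: subb_def cj_def)
    define S where "S j = {x \<in> univ (Bs ! j). h j x \<in> univ (cj j)}" for j
    define Ds where "Ds = map (\<lambda>j. restr (A n j) (S j)) [0..<Jk J p]"
    have key: "restr (A n j) (S j) \<in> binom (Bs ! j) (A p j) \<and> im j (S j) = cj j" if j: "j < Jk J p" for j
    proof -
      have jn: "j < Jk J n" "j < Jk J l" using j Jpm by auto
      have cjsub: "substructure (cj j) (im j (univ (Bs ! j)))" "isomorphic (cj j) (A p j)"
        using cjb[OF j] by (auto simp: binom_def)
      have imsub: "substructure (im j (univ (Bs ! j))) (E j)" using imB[OF j] by (simp add: binom_def)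
      have cjE: "substructure (cj j) (E j)" using substr_trans cjsub imsub by blast
      have "univ (cj j) \<subseteq> h j ` univ (Bs ! j)" using cjsub(1) by (simp add: substructure_def im_def)
      hence hS: "h j ` S j = univ (cj j)" by (auto simp: S_def)
      have ime: "im j (S j) = cj j" unfolding im_def hS using substr_eq_restr[OF cjE] by simp
      have Bwf: "wf_str (Bs ! j)" using substr_wf[OF Bsub[OF j]] .
      have Sne: "S j \<noteq> {}" using hS substr_wf[OF cjE] by (auto simp: wf_str_def)
      have SB: "S j \<subseteq> univ (Bs ! j)" by (auto simp: S_def)
      have "restr (A n j) (S j) = restr (Bs ! j) (S j)"
        using substr_eq_restr[OF Bsub[OF j]] restr_restr[OF SB] by metis
      hence sub1: "substructure (restr (A n j) (S j)) (Bs ! j)" using substr_restr[OF Bwf SB Sne] by simp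
      have sub2: "substructure (restr (A n j) (S j)) (A n j)" using substr_trans[OF sub1 Bsub[OF j]] .
      have "embedding (h j) (restr (A n j) (S j)) (E j)" using emb_substr[OF sub2 hemb[OF jn(1)]] .
      hence "im j (S j) \<in> binom (E j) (restr (A n j) (S j))"
        unfolding im_def using copy_binom[of "h j" "restr (A n j) (S j)" "E j"] substr_wf[OF sub2] Ewf[OF jn(2)]
        by simp
      hence "isomorphic (cj j) (restr (A n j) (S j))" using ime by (simp add: binom_def)
      hence "isomorphic (restr (A n j) (S j)) (A p j)" using iso_sym iso_trans cjsub(2) by blast
      thus ?thesis using sub1 ime by (simp add: binom_def)
    qed
    have "Ds \<in> seq_binom (Jk J p) (\<lambda>j. Bs ! j) (A p)" using key by (simp add: seq_binom_def Ds_def)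
    hence "colf Ds = c0" using mono by blast
    moreover have "colf Ds = Q c"
    proof -
      have "map (\<lambda>j. im j (univ (Ds ! j))) [0..<Jk J p] = snd c"
        using key c(1) by (intro nth_equalityI) (auto simp: Ds_def valid_def cj_def)
      moreover have "fst c = fst e0" using c(2) sub by (simp add: subb_def)
      ultimately show ?thesis by (simp add: colf_def) (metis prod.collapse)
    qed
    ultimately show ?thesis by simp
  qed
  thus ?thesis using val sub by blast
qed

end


context gs begin

lemma rn_Suc: "rn (Suc n) Z = rn n Z @ [Z n]"
  by (simp add: rn_def)

lemma ext_block_ge: assumes X: "X \<in> R" and f: "fitsat b X e" and Z: "Z \<in> bs b X"
  and l: "subb (length b) (Z (length b)) (X l)" shows "e \<le> l"
proof (cases "b = []")
  case True thus ?thesis using f by (simp add: fitsat_def)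
next
  case False
  have ZR: "Z \<in> R" "leq Z X" "rn (length b) Z = b" using Z basic_iff by auto
  have lb: "last b = Z (length b - 1)" using last_rn[OF False ZR(3)] .
  have "fst (Z (length b - 1)) < fst (Z (length b))" using RR_fst_mono[OF ZR(1)] False by simp
  hence "fst (X (e - 1)) < fst (X l)" using lb f False l by (simp add: fitsat_def subb_def)
  hence "e - 1 < l" using RR_fst_less[OF X] by blast
  thus ?thesis using f False by (simp add: fitsat_def)
qed

lemma A4c:
  fixes P :: "block list \<Rightarrow> bool"
  assumes Y: "Y \<in> R" and f: "fitsat b Y e"
  shows "\<exists>X\<in>R. leq X Y \<and> rn e X = rn e Y \<and>
     ((\<forall>Z\<in>bs b X. P (rn (Suc (length b)) Z)) \<or> (\<forall>Z\<in>bs b X. \<not> P (rn (Suc (length b)) Z)))"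
proof -
  define p where "p = length b"
  define Q where "Q c = P (b @ [c])" for c
  define mm where "mm t = t + p + 1" for t
  define nn where "nn t = (SOME n. n > mm t \<and> arrow (Jk J p) (A n) (A (mm t)) (A p))" for t
  have nn: "nn t > mm t \<and> arrow (Jk J p) (A (nn t)) (A (mm t)) (A p)" for t
  proof -
    have "p < mm t" by (simp add: mm_def)
    thus ?thesis using arrA unfolding nn_def by (metis (no_types, lifting) someI_ex)
  qed
  define beta where "beta t = nn t + e" for t
  define pr where "pr t = (SOME x. valid (mm t) (fst x) \<and> subb (mm t) (fst x) (Y (beta t)) \<and>
      (\<forall>c. valid p c \<longrightarrow> subb p c (fst x) \<longrightarrow> Q c = snd x))" for t
  have pr: "valid (mm t) (fst (pr t)) \<and> subb (mm t) (fst (pr t)) (Y (beta t)) \<and>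
      (\<forall>c. valid p c \<longrightarrow> subb p c (fst (pr t)) \<longrightarrow> Q c = snd (pr t))" for t
  proof -
    have "valid (beta t) (Y (beta t))" using Y by (simp add: RR_iff)
    moreover have "p < mm t" by (simp add: mm_def)
    ultimately have "\<exists>M col. valid (mm t) M \<and> subb (mm t) M (Y (beta t)) \<and>
      (\<forall>c. valid p c \<longrightarrow> subb p c M \<longrightarrow> Q c = col)"
      using mono_block[of "beta t" "Y (beta t)" p "mm t" "nn t" Q] nn[of t] by (simp add: beta_def)
    hence "\<exists>x. valid (mm t) (fst x) \<and> subb (mm t) (fst x) (Y (beta t)) \<and>
      (\<forall>c. valid p c \<longrightarrow> subb p c (fst x) \<longrightarrow> Q c = snd x)" by auto
    from someI_ex[OF this] show ?thesis unfolding pr_def .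
  qed
  obtain cc where T: "infinite {t. snd (pr t) = cc}"
  proof -
    have "UNIV = {t::nat. snd (pr t) = True} \<union> {t. snd (pr t) = False}" by auto
    hence "infinite {t. snd (pr t) = True} \<or> infinite {t. snd (pr t) = False}"
      by (metis finite_Un infinite_UNIV_nat)
    thus ?thesis using that by blast
  qed
  define T where "T = {t. snd (pr t) = cc}"
  have Tex: "\<exists>t\<in>T. t \<ge> x" for x using T unfolding T_def infinite_nat_iff_unbounded_le by blast
  define s where "s = rec_nat (SOME t. t \<in> T \<and> t \<ge> e) (\<lambda>i x. SOME t. t \<in> T \<and> t \<ge> nn x + e + i + 1)"
  have Tex': "\<exists>t. t \<in> T \<and> t \<ge> x" for x using Tex by blast
  have s_0: "s 0 = (SOME t. t \<in> T \<and> t \<ge> e)" by (simp add: s_def)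
  have s_S: "s (Suc i) = (SOME t. t \<in> T \<and> t \<ge> nn (s i) + e + i + 1)" for i by (simp add: s_def)
  have s0: "s 0 \<in> T \<and> s 0 \<ge> e" unfolding s_0 by (rule someI_ex[OF Tex'])
  have sS: "s (Suc i) \<in> T \<and> s (Suc i) \<ge> nn (s i) + e + i + 1" for i
    unfolding s_S by (rule someI_ex[OF Tex'])
  have sT: "s i \<in> T" for i using s0 sS by (cases i) auto
  have sge: "s i \<ge> i + e" for i
  proof (induction i)
    case 0 thus ?case using s0 by simp
  next
    case (Suc i)
    have "nn (s i) > s i" using nn[of "s i"] by (simp add: mm_def)
    thus ?case using sS[of i] Suc by simp
  qed
  have bmono: "beta (s i) < beta (s (Suc i))" for i
  proof -
    have "nn (s (Suc i)) > s (Suc i)" using nn[of "s (Suc i)"] by (simp add: mm_def)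
    thus ?thesis using sS[of i] by (simp add: beta_def)
  qed
  define cpb where "cpb k M = (SOME c. valid k c \<and> subb k c M)" for k M
  define X where "X k = (if k < e then Y k else cpb k (fst (pr (s (k - e)))))" for k
  have Xk: "valid k (X k) \<and> subb k (X k) (fst (pr (s (k - e))))" if "k \<ge> e" for k
  proof -
    have "k \<le> mm (s (k - e))" using sge[of "k - e"] that by (simp add: mm_def)
    hence "\<exists>c. valid k c \<and> subb k c (fst (pr (s (k - e))))" using copy_block pr by blast
    hence "valid k (cpb k (fst (pr (s (k - e))))) \<and> subb k (cpb k (fst (pr (s (k - e))))) (fst (pr (s (k - e))))"
      unfolding cpb_def by (rule someI_ex)
    thus ?thesis using that unfolding X_def by simp
  qed
  have XY: "subb k (X k) (Y (beta (s (k - e))))" if "k \<ge> e" for k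
  proof -
    have "k \<le> mm (s (k - e))" using sge[of "k - e"] that by (simp add: mm_def)
    thus ?thesis using subb_trans Xk[OF that] pr by blast
  qed
  have fX: "fst (X k) = fst (Y (beta (s (k - e))))" if "k \<ge> e" for k
    using XY[OF that] by (simp add: subb_def)
  have "fst (X k) < fst (X (Suc k))" for k
  proof -
    consider "Suc k < e" | "Suc k = e" | "k \<ge> e" by linarith
    thus ?thesis
    proof cases
      case 1 thus ?thesis using RR_fst_mono[OF Y] by (simp add: X_def)
    next
      case 2
      have "k < beta (s 0)" using 2 by (simp add: beta_def)
      thus ?thesis using 2 fX[of "Suc k"] RR_fst_mono[OF Y] by (simp add: X_def)
    next
      case 3
      have "Suc k - e = Suc (k - e)" using 3 by simp
      thus ?thesis using 3 fX[of k] fX[of "Suc k"] RR_fst_mono[OF Y] bmono by simp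
    qed
  qed
  hence "strict_mono (\<lambda>k. fst (X k))" by (simp add: strict_mono_Suc_iff)
  moreover have "valid k (X k)" for k using Xk Y by (cases "k < e") (auto simp: X_def RR_iff)
  ultimately have XR: "X \<in> R" by (simp add: RR_iff)
  have le: "leq X Y"
    unfolding leR_iff
  proof
    fix k show "\<exists>l. subb k (X k) (Y l)"
    proof (cases "k < e")
      case True
      have "subb k (Y k) (Y k)" using subb_refl Y by (simp add: RR_iff)
      thus ?thesis using True by (auto simp: X_def)
    next
      case False
      hence "e \<le> k" by simp
      thus ?thesis using XY by blast
    qed
  qed
  have rne: "rn e X = rn e Y" by (simp add: rn_eq_iff X_def)
  have fX: "fitsat b X e" using A3_1c[OF Y f XR le rne] .
  have col: "P (rn (Suc (length b)) Z) = cc" if Z: "Z \<in> bs b X" for Z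
  proof -
    have ZR: "Z \<in> R" "leq Z X" "rn (length b) Z = b" using Z basic_iff by auto
    obtain l where l: "subb p (Z p) (X l)" using ZR(2) leR_iff by blast
    have el: "e \<le> l" using ext_block_ge[OF XR fX Z] l by (simp add: p_def)
    have pl: "p \<le> l" using subb_index_ge[OF ZR(1) XR ZR(2) l] .
    have "subb p (Z p) (fst (pr (s (l - e))))" using subb_trans[OF l] Xk[OF el] pl by blast
    moreover have "valid p (Z p)" using ZR(1) by (simp add: RR_iff)
    ultimately have "Q (Z p) = snd (pr (s (l - e)))" using pr by blast
    also have "\<dots> = cc" using sT[of "l - e"] by (simp add: T_def)
    finally show ?thesis using ZR(3) by (simp add: Q_def rn_Suc p_def)
  qed
  show ?thesis
  proof (cases cc)
    case True thus ?thesis using col XR le rne by (intro bexI[of _ X]) auto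
  next
    case False thus ?thesis using col XR le rne by (intro bexI[of _ X]) auto
  qed
qed

end


context gs begin

definition rej :: "seqR set \<Rightarrow> seqR \<Rightarrow> block list \<Rightarrow> bool" where
  "rej U X b \<longleftrightarrow> (\<forall>Y\<in>R. leq Y X \<longrightarrow> bs b Y \<noteq> {} \<longrightarrow> \<not> bs b Y \<subseteq> U)"

definition Ext :: "block list \<Rightarrow> seqR \<Rightarrow> block list set" where
  "Ext a Y = {b. \<exists>Z\<in>bs a Y. \<exists>q\<ge>length a. b = rn q Z}"

definition G :: "nat \<Rightarrow> block list \<Rightarrow> nat \<Rightarrow> seqR \<Rightarrow> block list set" where
  "G i a d Y = {b \<in> Ext a Y. length a < length b \<and> fst (last b) = fst (Y (d + i))}"

lemma bs_mono: assumes "X \<in> R" "Y \<in> R" "leq Y X" shows "bs b Y \<subseteq> bs b X"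
proof
  fix Z assume "Z \<in> bs b Y"
  hence "Z \<in> R" "leq Z Y" "rn (length b) Z = b" by (auto simp: basic_iff)
  thus "Z \<in> bs b X" using leR_trans[OF _ assms(2,1) _ assms(3)] by (auto simp: basic_iff)
qed

lemma rej_mono: "rej U X b \<Longrightarrow> X \<in> R \<Longrightarrow> Y \<in> R \<Longrightarrow> leq Y X \<Longrightarrow> rej U Y b"
  unfolding rej_def using leR_trans by blast

lemma take_rn: "m \<le> n \<Longrightarrow> take m (rn n Z) = rn m Z"
  by (simp add: rn_def take_map)

lemma bs_rn_mono: "n \<le> n' \<Longrightarrow> bs (rn n' W) X \<subseteq> bs (rn n W) X"
proof
  fix Z assume "n \<le> n'" "Z \<in> bs (rn n' W) X"
  thus "Z \<in> bs (rn n W) X" by (auto simp: basic_iff rn_eq_iff)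
qed

lemma decide: assumes Y: "Y \<in> R" and f: "fitsat a Y e"
  shows "\<exists>X\<in>R. leq X Y \<and> rn e X = rn e Y \<and> (bs a X \<subseteq> U \<or> rej U X a)"
proof (cases "rej U Y a")
  case True thus ?thesis using Y leR_refl by blast
next
  case False
  then obtain Y' where Y': "Y' \<in> R" "leq Y' Y" "bs a Y' \<noteq> {}" "bs a Y' \<subseteq> U" by (auto simp: rej_def)
  obtain X where "X \<in> R" "leq X Y" "rn e X = rn e Y" "bs a X \<subseteq> bs a Y'"
    using A3_2c[OF Y f Y'(1,2,3)] by blast
  thus ?thesis using Y'(4) by blast
qed

lemma decide_finite: assumes X: "X \<in> R" and F: "finite F" and fF: "\<forall>b\<in>F. fitsat b X e"
  shows "\<exists>X'\<in>R. leq X' X \<and> rn e X' = rn e X \<and> (\<forall>b\<in>F. bs b X' \<subseteq> U \<or> rej U X' b)"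
  using F fF
proof (induction F rule: finite_induct)
  case empty thus ?case using X leR_refl by blast
next
  case (insert b F)
  then obtain X1 where X1: "X1 \<in> R" "leq X1 X" "rn e X1 = rn e X" "\<forall>b\<in>F. bs b X1 \<subseteq> U \<or> rej U X1 b"
    by blast
  have "fitsat b X1 e" using A3_1c[OF X _ X1(1,2,3)] insert by blast
  then obtain X2 where X2: "X2 \<in> R" "leq X2 X1" "rn e X2 = rn e X1" "bs b X2 \<subseteq> U \<or> rej U X2 b"
    using decide[OF X1(1)] by blast
  have "\<forall>b\<in>F. bs b X2 \<subseteq> U \<or> rej U X2 b"
    using X1(4) bs_mono[OF X1(1) X2(1,2)] rej_mono[OF _ X1(1) X2(1,2)] by blast
  moreover have "leq X2 X" using leR_trans X1 X2 X by blast
  ultimately show ?case using X2 X1 by auto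
qed

lemma finite_blocklists:
  "finite {b :: block list. length b \<le> N \<and> (\<forall>k<length b. valid k (b!k) \<and> k \<le> fst (b!k) \<and> fst (b!k) \<le> M)}"
proof -
  define S where "S = (\<Union>n\<in>{..M}. \<Union>j\<in>{..<Jk J n}. {D. substructure D (A n j)})"
  have S: "finite S" unfolding S_def using finite_substrs finA by auto
  define BL where "BL = {..M} \<times> {xs. set xs \<subseteq> S \<and> length xs \<le> Jk J M}"
  have BL: "finite BL" unfolding BL_def using S finite_lists_length_le by blast
  have "{b :: block list. length b \<le> N \<and> (\<forall>k<length b. valid k (b!k) \<and> k \<le> fst (b!k) \<and> fst (b!k) \<le> M)}
    \<subseteq> {xs. set xs \<subseteq> BL \<and> length xs \<le> N}"
  proof (clarsimp)
    fix b :: "block list" and c assume b: "length b \<le> N" "\<forall>k<length b. valid k (b!k) \<and> k \<le> fst (b!k) \<and> fst (b!k) \<le> M"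
      and c: "c \<in> set b"
    obtain k where k: "k < length b" "c = b ! k" using c by (metis in_set_conv_nth)
    have v: "valid k c" "k \<le> fst c" "fst c \<le> M" using b k by auto
    have "length (snd c) \<le> Jk J M" using v Jk_mono[of k M J] by (simp add: valid_def)
    moreover have "set (snd c) \<subseteq> S"
    proof
      fix D assume "D \<in> set (snd c)"
      then obtain j where j: "j < length (snd c)" "D = snd c ! j" by (metis in_set_conv_nth)
      have jk: "j < Jk J k" using j v by (simp add: valid_def)
      hence "j < Jk J (fst c)" using Jk_mono[OF v(2), of J] by simp
      moreover have "substructure D (A (fst c) j)" using v jk j by (simp add: valid_def binom_def)
      ultimately show "D \<in> S" unfolding S_def using v(3) by blast
    qed
    ultimately show "c \<in> BL" unfolding BL_def using v(3) by (cases c) auto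
  qed
  moreover have "finite {xs. set xs \<subseteq> BL \<and> length xs \<le> N}" using finite_lists_length_le[OF BL] .
  ultimately show ?thesis by (rule finite_subset)
qed

lemma G_finite: assumes Y: "Y \<in> R" shows "finite (G i a d Y)"
proof -
  define M where "M = fst (Y (d + i))"
  have "G i a d Y \<subseteq> {b :: block list. length b \<le> Suc M \<and> (\<forall>k<length b. valid k (b!k) \<and> k \<le> fst (b!k) \<and> fst (b!k) \<le> M)}"
  proof
    fix b assume b: "b \<in> G i a d Y"
    then obtain Z q where Z: "Z \<in> bs a Y" "b = rn q Z" and lb: "length a < length b" "fst (last b) = M"
      by (auto simp: G_def Ext_def M_def)
    have ZR: "Z \<in> R" using Z basic_iff by auto
    have q: "q = length b" "0 < q" using Z lb by auto
    have bne: "b \<noteq> []" using q by auto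
    have "rn (length b) Z = b" using q(1) Z(2) by simp
    hence last: "last b = Z (q - 1)" using last_rn[OF bne] q(1) by simp
    have smZ: "strict_mono (\<lambda>k. fst (Z k))" using ZR by (simp add: RR_iff)
    have fk: "k \<le> fst (Z k)" for k using sm_ge[OF smZ] by simp
    have le: "fst (Z k) \<le> M" if "k < q" for k
      using RR_fst_le[OF ZR, of k "q - 1"] that last lb by simp
    have "q - 1 \<le> M" using fk[of "q - 1"] le[of "q - 1"] q by simp
    hence "length b \<le> Suc M" using q by simp
    moreover have "\<forall>k<length b. valid k (b!k) \<and> k \<le> fst (b!k) \<and> fst (b!k) \<le> M"
    proof (intro allI impI)
      fix k assume k: "k < length b"
      have bk: "b ! k = Z k" using k q(1) Z(2) rn_nth by metis
      have "valid k (Z k)" using ZR by (simp add: RR_iff)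
      thus "valid k (b!k) \<and> k \<le> fst (b!k) \<and> fst (b!k) \<le> M" using bk fk le k q(1) by simp
    qed
    ultimately show "b \<in> {b :: block list. length b \<le> Suc M \<and> (\<forall>k<length b. valid k (b!k) \<and> k \<le> fst (b!k) \<and> fst (b!k) \<le> M)}"
      by blast
  qed
  thus ?thesis using finite_blocklists finite_subset by blast
qed

lemma G_fitsat: assumes Y: "Y \<in> R" and b: "b \<in> G i a d Y" shows "fitsat b Y (Suc (d + i))"
proof -
  obtain Z q where Z: "Z \<in> bs a Y" "b = rn q Z" and lb: "length a < length b" "fst (last b) = fst (Y (d + i))"
    using b by (auto simp: G_def Ext_def)
  have "Z \<in> bs b Y" using Z basic_iff by auto
  moreover have "b \<noteq> []" using lb by auto
  ultimately show ?thesis using lb by (auto simp: fitsat_def)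
qed

end


context gs begin

lemma decides_mono: "bs b X \<subseteq> U \<or> rej U X b \<Longrightarrow> X \<in> R \<Longrightarrow> Y \<in> R \<Longrightarrow> leq Y X \<Longrightarrow> bs b Y \<subseteq> U \<or> rej U Y b"
  using bs_mono rej_mono by blast

lemma last_block_depth: assumes L: "L \<in> R" and f: "fitsat a L d" and Z: "Z \<in> bs a L"
  and q: "length a < q" and l: "subb (q - 1) (Z (q - 1)) (L l)"
  shows "d \<le> l"
proof -
  have ZR: "Z \<in> R" "leq Z L" using Z by (auto simp: basic_iff)
  obtain l' where l': "subb (length a) (Z (length a)) (L l')" using ZR(2) leR_iff by blast
  have "d \<le> l'" using ext_block_ge[OF L f Z l'] .
  moreover have "fst (Z (length a)) \<le> fst (Z (q - 1))" using RR_fst_le[OF ZR(1)] q by simp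
  hence "fst (L l') \<le> fst (L l)" using l l' by (simp add: subb_def)
  hence "l' \<le> l" using RR_fst_le[OF L] by blast
  ultimately show ?thesis by simp
qed

lemma decide_all: assumes Y: "Y \<in> R" and f: "fitsat a Y d"
  shows "\<exists>L\<in>R. leq L Y \<and> rn d L = rn d Y \<and> (\<forall>b\<in>Ext a L. bs b L \<subseteq> U \<or> rej U L b)"
proof -
  obtain X0 where X0: "X0 \<in> R" "leq X0 Y" "rn d X0 = rn d Y" "bs a X0 \<subseteq> U \<or> rej U X0 a"
    using decide[OF Y f] by blast
  define stepf where "stepf i X = (SOME X'. X' \<in> R \<and> leq X' X \<and> rn (Suc (d + i)) X' = rn (Suc (d + i)) X \<and>
      (\<forall>b\<in>G i a d X. bs b X' \<subseteq> U \<or> rej U X' b))" for i X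
  have stepf: "stepf i X \<in> R \<and> leq (stepf i X) X \<and> rn (Suc (d + i)) (stepf i X) = rn (Suc (d + i)) X \<and>
      (\<forall>b\<in>G i a d X. bs b (stepf i X) \<subseteq> U \<or> rej U (stepf i X) b)" if X: "X \<in> R" for i X
  proof -
    have "\<exists>X'\<in>R. leq X' X \<and> rn (Suc (d + i)) X' = rn (Suc (d + i)) X \<and> (\<forall>b\<in>G i a d X. bs b X' \<subseteq> U \<or> rej U X' b)"
      using decide_finite[OF X G_finite[OF X]] G_fitsat[OF X] by blast
    hence "\<exists>X'. X' \<in> R \<and> leq X' X \<and> rn (Suc (d + i)) X' = rn (Suc (d + i)) X \<and> (\<forall>b\<in>G i a d X. bs b X' \<subseteq> U \<or> rej U X' b)"
      by blast
    from someI_ex[OF this] show ?thesis unfolding stepf_def .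
  qed
  define Bs where "Bs = rec_nat X0 stepf"
  have Bs0: "Bs 0 = X0" and BsS: "Bs (Suc i) = stepf i (Bs i)" for i by (simp_all add: Bs_def)
  have BsR: "Bs i \<in> R" for i by (induction i) (use X0 Bs0 BsS stepf in auto)
  obtain L where L: "L \<in> R" "\<forall>n. leq L (Bs n) \<and> rn (Suc d + n) L = rn (Suc d + n) (Bs n)"
    using fusion[of Bs "Suc d"] BsR BsS stepf by auto
  have LY: "leq L Y" using leR_trans[OF L(1) X0(1) Y _ X0(2)] L(2) Bs0 by metis
  have "rn (Suc d) L = rn (Suc d) X0" using L(2)[rule_format, of 0] Bs0 by simp
  hence rnd: "rn d L = rn d Y" using X0(3) rn_eq_mono[of "Suc d" L X0 d] by simp
  have fL: "fitsat a L d" using A3_1c[OF Y f L(1) LY rnd] .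
  have "bs b L \<subseteq> U \<or> rej U L b" if b: "b \<in> Ext a L" for b
  proof -
    obtain Z q where Z: "Z \<in> bs a L" "q \<ge> length a" "b = rn q Z" using b by (auto simp: Ext_def)
    have ZR: "Z \<in> R" "leq Z L" "rn (length a) Z = a" using Z by (auto simp: basic_iff)
    show ?thesis
    proof (cases "q = length a")
      case True
      hence "b = a" using Z ZR by simp
      thus ?thesis using decides_mono[OF X0(4) X0(1) L(1)] L(2) Bs0 by metis
    next
      case False
      hence q: "length a < q" using Z by simp
      obtain l where l: "subb (q - 1) (Z (q - 1)) (L l)" using ZR(2) leR_iff by blast
      have dl: "d \<le> l" using last_block_depth[OF L(1) fL Z(1) q l] .
      define i where "i = l - d"
      have li: "l = d + i" using dl by (simp add: i_def)
      have bne: "b \<noteq> []" using q Z(3) rn_length[of q Z] by (metis not_less0 list.size(3))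
      have "last b = Z (q - 1)" using last_rn[OF bne] Z(3) by simp
      hence "fst (last b) = fst (L l)" using l by (simp add: subb_def)
      also have "\<dots> = fst (Bs i (d + i))"
      proof -
        have "\<forall>k<Suc d + i. L k = Bs i k" using L(2) by (simp add: rn_eq_iff)
        thus ?thesis using li by simp
      qed
      finally have lastb: "fst (last b) = fst (Bs i (d + i))" .
      have "Z \<in> bs a (Bs i)" using bs_mono[OF BsR L(1)] L(2) Z(1) by blast
      hence "b \<in> Ext a (Bs i)" using Z by (auto simp: Ext_def)
      hence "b \<in> G i a d (Bs i)" using lastb q Z(3) by (simp add: G_def)
      hence "bs b (Bs (Suc i)) \<subseteq> U \<or> rej U (Bs (Suc i)) b" using stepf[OF BsR] BsS by metis
      thus ?thesis using decides_mono[OF _ BsR L(1)] L(2) by blast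
    qed
  qed
  thus ?thesis using L(1) LY rnd by blast
qed

lemma reject_step: assumes Y: "Y \<in> R" and X: "X \<in> R" "leq X Y" and F: "finite F"
  and fF: "\<forall>b\<in>F. fitsat b X e \<and> length a \<le> length b \<and> take (length a) b = a"
  and dec: "\<forall>b\<in>Ext a Y. bs b Y \<subseteq> U \<or> rej U Y b"
  shows "\<exists>X'\<in>R. leq X' X \<and> rn e X' = rn e X \<and>
    (\<forall>b\<in>F. rej U Y b \<longrightarrow> (\<forall>Z\<in>bs b X'. rej U Y (rn (Suc (length b)) Z)))"
  using F fF
proof (induction F rule: finite_induct)
  case empty thus ?case using X leR_refl by blast
next
  case (insert b F)
  then obtain X1 where X1: "X1 \<in> R" "leq X1 X" "rn e X1 = rn e X"
    "\<forall>b\<in>F. rej U Y b \<longrightarrow> (\<forall>Z\<in>bs b X1. rej U Y (rn (Suc (length b)) Z))"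
    by blast
  have X1Y: "leq X1 Y" using leR_trans[OF X1(1) X(1) Y X1(2) X(2)] .
  have fb: "fitsat b X1 e" "length a \<le> length b" "take (length a) b = a"
    using A3_1c[OF X(1) _ X1(1,2,3)] insert by auto
  show ?case
  proof (cases "rej U Y b")
    case False thus ?thesis using X1 by blast
  next
    case True
    obtain X2 where X2: "X2 \<in> R" "leq X2 X1" "rn e X2 = rn e X1"
      "(\<forall>Z\<in>bs b X2. rej U Y (rn (Suc (length b)) Z)) \<or> (\<forall>Z\<in>bs b X2. \<not> rej U Y (rn (Suc (length b)) Z))"
      using A4c[OF X1(1) fb(1), of "rej U Y"] by blast
    have X2Y: "leq X2 Y" using leR_trans[OF X2(1) X1(1) Y X2(2) X1Y] .
    have good: "\<forall>Z\<in>bs b X2. rej U Y (rn (Suc (length b)) Z)"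
    proof (rule ccontr)
      assume "\<not> ?thesis"
      hence none: "\<forall>Z\<in>bs b X2. \<not> rej U Y (rn (Suc (length b)) Z)" using X2(4) by blast
      have ne: "bs b X2 \<noteq> {}" using A3_1c[OF X1(1) fb(1) X2(1,2,3)] by (simp add: fitsat_def)
      have "bs b X2 \<subseteq> U"
      proof
        fix Z assume Z: "Z \<in> bs b X2"
        have ZR: "Z \<in> R" "leq Z X2" "rn (length b) Z = b" using Z by (auto simp: basic_iff)
        have ZY: "leq Z Y" using leR_trans[OF ZR(1) X2(1) Y ZR(2) X2Y] .
        have "rn (length a) Z = a" using take_rn[OF fb(2), of Z] ZR(3) fb(3) by simp
        hence "Z \<in> bs a Y" using ZR ZY by (simp add: basic_iff)
        hence "rn (Suc (length b)) Z \<in> Ext a Y" using fb(2) unfolding Ext_def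
          by (intro CollectI bexI[of _ Z] exI[of _ "Suc (length b)"]) auto
        hence "bs (rn (Suc (length b)) Z) Y \<subseteq> U" using dec none Z by blast
        moreover have "Z \<in> bs (rn (Suc (length b)) Z) Y" using ZR ZY by (simp add: basic_iff)
        ultimately show "Z \<in> U" by blast
      qed
      thus False using True X2(1) X2Y ne by (auto simp: rej_def)
    qed
    have "\<forall>b\<in>F. rej U Y b \<longrightarrow> (\<forall>Z\<in>bs b X2. rej U Y (rn (Suc (length b)) Z))"
      using X1(4) bs_mono[OF X1(1) X2(1,2)] by blast
    moreover have "leq X2 X" using leR_trans[OF X2(1) X1(1) X(1) X2(2) X1(2)] .
    ultimately show ?thesis using X2 X1 good by auto
  qed
qed

lemma reject_all: assumes Y: "Y \<in> R" and f: "fitsat a Y d"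
  and dec: "\<forall>b\<in>Ext a Y. bs b Y \<subseteq> U \<or> rej U Y b" and ra: "rej U Y a"
  shows "\<exists>C\<in>R. leq C Y \<and> rn d C = rn d Y \<and> (\<forall>b\<in>Ext a C. rej U Y b)"
proof -
  define H where "H i X = (if i = 0 then {a} else G (i - 1) a d X)" for i X
  define PP where "PP i X X' \<longleftrightarrow> X' \<in> R \<and> leq X' X \<and> rn (d + i) X' = rn (d + i) X \<and>
      (\<forall>b\<in>H i X. rej U Y b \<longrightarrow> (\<forall>Z\<in>bs b X'. rej U Y (rn (Suc (length b)) Z)))" for i X X'
  define stepf where "stepf i X = (SOME X'. PP i X X')" for i X
  have stepf: "PP i X (stepf i X)" if X: "X \<in> R" "leq X Y" "rn d X = rn d Y" for i X
  proof -
    have fin: "finite (H i X)" using G_finite[OF X(1)] by (simp add: H_def)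
    have fH: "\<forall>b\<in>H i X. fitsat b X (d + i) \<and> length a \<le> length b \<and> take (length a) b = a"
    proof
      fix b assume b: "b \<in> H i X"
      show "fitsat b X (d + i) \<and> length a \<le> length b \<and> take (length a) b = a"
      proof (cases "i = 0")
        case True
        hence "b = a" using b by (simp add: H_def)
        thus ?thesis using A3_1c[OF Y f X] True by simp
      next
        case False
        hence bG: "b \<in> G (i - 1) a d X" using b by (simp add: H_def)
        hence "fitsat b X (Suc (d + (i - 1)))" using G_fitsat[OF X(1)] by blast
        moreover have "Suc (d + (i - 1)) = d + i" using False by simp
        moreover obtain Z q where "Z \<in> bs a X" "q \<ge> length a" "b = rn q Z"
          using bG by (auto simp: G_def Ext_def)
        ultimately show ?thesis using take_rn[of "length a" q Z] by (auto simp: basic_iff)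
      qed
    qed
    have "\<exists>X'. PP i X X'" using reject_step[OF Y X(1,2) fin fH dec] unfolding PP_def by blast
    thus ?thesis unfolding stepf_def by (rule someI_ex)
  qed
  define Bs where "Bs = rec_nat Y stepf"
  have Bs0: "Bs 0 = Y" and BsS: "Bs (Suc i) = stepf i (Bs i)" for i by (simp_all add: Bs_def)
  have inv: "Bs i \<in> R \<and> leq (Bs i) Y \<and> rn d (Bs i) = rn d Y" for i
  proof (induction i)
    case 0 thus ?case using Bs0 Y leR_refl by simp
  next
    case (Suc i)
    have P: "PP i (Bs i) (Bs (Suc i))" using stepf Suc BsS by metis
    hence "Bs (Suc i) \<in> R" "leq (Bs (Suc i)) (Bs i)" "rn (d + i) (Bs (Suc i)) = rn (d + i) (Bs i)"
      by (auto simp: PP_def)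
    moreover have "rn d (Bs (Suc i)) = rn d (Bs i)" using rn_eq_mono[OF calculation(3), of d] by simp
    moreover have "leq (Bs (Suc i)) Y" using leR_trans[OF calculation(1) _ Y calculation(2)] Suc by blast
    ultimately show ?case using Suc by simp
  qed
  have PPi: "PP i (Bs i) (Bs (Suc i))" for i using stepf inv BsS by metis
  obtain C where C: "C \<in> R" "\<forall>n. leq C (Bs n) \<and> rn (d + n) C = rn (d + n) (Bs n)"
    using fusion[of Bs d] inv PPi by (auto simp: PP_def)
  have CY: "leq C Y" using C(2) Bs0 by metis
  have rnd: "rn d C = rn d Y" using C(2) Bs0 by (metis add_0_right)
  have fC: "fitsat a C d" using A3_1c[OF Y f C(1) CY rnd] .
  have main: "\<forall>q. length a \<le> q \<longrightarrow> rej U Y (rn q Z)" if Z: "Z \<in> bs a C" for Z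
  proof (intro allI impI)
    fix q assume "length a \<le> q"
    thus "rej U Y (rn q Z)"
    proof (induction q rule: dec_induct)
      case base
      thus ?case using Z ra by (simp add: basic_iff)
    next
      case (step q)
      have ZR: "Z \<in> R" "leq Z C" "rn (length a) Z = a" using Z by (auto simp: basic_iff)
      define b where "b = rn q Z"
      obtain i where bi: "b \<in> H i (Bs i)"
      proof (cases "q = length a")
        case True
        hence "b = a" using ZR by (simp add: b_def)
        thus ?thesis using that[of 0] by (simp add: H_def)
      next
        case False
        hence q: "length a < q" using step by simp
        obtain l where l: "subb (q - 1) (Z (q - 1)) (C l)" using ZR(2) leR_iff by blast
        have dl: "d \<le> l" using last_block_depth[OF C(1) fC Z q l] .
        define i where "i = Suc (l - d)"
        have bne: "b \<noteq> []" using q by (simp add: b_def) (metis not_less0 list.size(3) rn_length)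
        have "last b = Z (q - 1)" using last_rn[OF bne] by (simp add: b_def)
        hence "fst (last b) = fst (C l)" using l by (simp add: subb_def)
        also have "\<dots> = fst (Bs i (d + (i - 1)))"
        proof -
          have "\<forall>k<d + i. C k = Bs i k" using C(2) by (simp add: rn_eq_iff)
          moreover have "l < d + i" "l = d + (i - 1)" using dl by (auto simp: i_def)
          ultimately show ?thesis by simp
        qed
        finally have lastb: "fst (last b) = fst (Bs i (d + (i - 1)))" .
        have "Z \<in> bs a (Bs i)" using bs_mono[OF _ C(1)] inv C(2) Z by blast
        hence "b \<in> Ext a (Bs i)" using step by (auto simp: Ext_def b_def)
        hence "b \<in> G (i - 1) a d (Bs i)" using lastb q by (simp add: G_def b_def)
        thus ?thesis using that[of i] by (simp add: H_def i_def)
      qed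
      have "Z \<in> bs b (Bs (Suc i))"
      proof -
        have "leq Z (Bs (Suc i))" using leR_trans[OF ZR(1) C(1) _ ZR(2)] inv C(2) by blast
        thus ?thesis using ZR(1) step by (simp add: basic_iff b_def)
      qed
      moreover have "rej U Y b" using step by (simp add: b_def)
      ultimately have "rej U Y (rn (Suc (length b)) Z)" using PPi[of i] bi by (auto simp: PP_def)
      thus ?case by (simp add: b_def)
    qed
  qed
  have "\<forall>b\<in>Ext a C. rej U Y b" using main by (auto simp: Ext_def)
  thus ?thesis using C(1) CY rnd by blast
qed

lemma open_ramsey: assumes op: "\<forall>W\<in>U. \<exists>n. bs (rn n W) W \<subseteq> U" and B: "B \<in> R" and ne: "bs a B \<noteq> {}"
  shows "\<exists>C\<in>bs a B. bs a C \<subseteq> U \<or> bs a C \<inter> U = {}"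
proof -
  obtain d where f: "fitsat a B d" using fitsat_exists[OF B ne] by blast
  obtain L where L: "L \<in> R" "leq L B" "rn d L = rn d B" "\<forall>b\<in>Ext a L. bs b L \<subseteq> U \<or> rej U L b"
    using decide_all[OF B f] by blast
  have fL: "fitsat a L d" using A3_1c[OF B f L(1,2,3)] .
  obtain Z where Z: "Z \<in> bs a L" using fL by (auto simp: fitsat_def)
  have "a \<in> Ext a L" using Z by (auto simp: Ext_def basic_iff intro!: bexI[of _ Z] exI[of _ "length a"])
  hence "bs a L \<subseteq> U \<or> rej U L a" using L(4) by blast
  thus ?thesis
  proof
    assume acc: "bs a L \<subseteq> U"
    have "Z \<in> bs a B" using bs_mono[OF B L(1,2)] Z by blast
    moreover have "bs a Z \<subseteq> U" using bs_mono[OF L(1)] Z acc by (auto simp: basic_iff)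
    ultimately show ?thesis by blast
  next
    assume rj: "rej U L a"
    obtain C' where C': "C' \<in> R" "leq C' L" "rn d C' = rn d L" "\<forall>b\<in>Ext a C'. rej U L b"
      using reject_all[OF L(1) fL L(4) rj] by blast
    have fC': "fitsat a C' d" using A3_1c[OF L(1) fL C'(1,2,3)] .
    obtain C where C: "C \<in> bs a C'" using fC' by (auto simp: fitsat_def)
    have CR: "C \<in> R" "leq C C'" "rn (length a) C = a" using C by (auto simp: basic_iff)
    have C'B: "leq C' B" using leR_trans[OF C'(1) L(1) B C'(2) L(2)] .
    have "C \<in> bs a B" using bs_mono[OF B C'(1) C'B] C by blast
    moreover have "bs a C \<inter> U = {}"
    proof (rule ccontr)
      assume "bs a C \<inter> U \<noteq> {}"
      then obtain W where W: "W \<in> bs a C" "W \<in> U" by blast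
      have WR: "W \<in> R" "leq W C" "rn (length a) W = a" using W by (auto simp: basic_iff)
      obtain n where n: "bs (rn n W) W \<subseteq> U" using op W by blast
      define n' where "n' = max n (length a)"
      have sub: "bs (rn n' W) W \<subseteq> U" using bs_rn_mono[of n n' W W] n by (auto simp: n'_def)
      have WC': "leq W C'" using leR_trans[OF WR(1) CR(1) C'(1) WR(2) CR(2)] .
      have WL: "leq W L" using leR_trans[OF WR(1) C'(1) L(1) WC' C'(2)] .
      have "W \<in> bs a C'" using WR WC' by (simp add: basic_iff)
      hence "rn n' W \<in> Ext a C'" unfolding Ext_def
        by (intro CollectI bexI[of _ W] exI[of _ n']) (auto simp: n'_def)
      hence "rej U L (rn n' W)" using C'(4) by blast
      moreover have "W \<in> bs (rn n' W) W" using WR leR_refl by (simp add: basic_iff)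
      ultimately show False using sub WR(1) WL by (auto simp: rej_def)
    qed
    ultimately show ?thesis by blast
  qed
qed

end


context gs begin

abbreviation "T \<equiv> ellentuck J A"

lemma bs_sub_R: "bs a B \<subseteq> R" by (auto simp: basic_def)

lemma bs_self: "C \<in> bs a B \<Longrightarrow> C \<in> bs a C"
  using leR_refl by (auto simp: basic_iff)

lemma bs_AR: "bs a B \<noteq> {} \<Longrightarrow> a \<in> AR J A"
proof -
  assume "bs a B \<noteq> {}"
  then obtain Z where "Z \<in> R" "rn (length a) Z = a" by (auto simp: basic_iff)
  hence "a \<in> ARn J A (length a)" unfolding ARn_def by (intro CollectI exI[of _ Z]) simp
  thus ?thesis unfolding AR_def by blast
qed

lemma ell_topspace: "topspace T = R"
proof
  show "topspace T \<subseteq> R" unfolding ellentuck_def using bs_sub_R by auto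
  show "R \<subseteq> topspace T"
  proof
    fix W assume W: "W \<in> R"
    have "W \<in> bs [] W" using W leR_refl by (simp add: basic_iff rn_def)
    moreover have "[] \<in> AR J A" using bs_AR calculation by blast
    ultimately show "W \<in> topspace T" unfolding ellentuck_def using W by auto
  qed
qed

lemma basic_open: "a \<in> AR J A \<Longrightarrow> B \<in> R \<Longrightarrow> openin T (bs a B)"
  unfolding ellentuck_def openin_topology_generated_by_iff
  by (rule generate_topology_on.Basis) blast

lemma ell_open: assumes "openin T U" shows "\<forall>W\<in>U. \<exists>n. bs (rn n W) W \<subseteq> U"
proof -
  have "generate_topology_on {basic J A a B | a B. a \<in> AR J A \<and> B \<in> R} U"
    using assms unfolding ellentuck_def openin_topology_generated_by_iff .
  thus ?thesis
  proof (induction rule: generate_topology_on.induct)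
    case Empty thus ?case by simp
  next
    case (Int a b)
    show ?case
    proof
      fix W assume W: "W \<in> a \<inter> b"
      obtain n1 n2 where "bs (rn n1 W) W \<subseteq> a" "bs (rn n2 W) W \<subseteq> b" using Int W by blast
      hence "bs (rn (max n1 n2) W) W \<subseteq> a \<inter> b"
        using bs_rn_mono[of n1 "max n1 n2" W W] bs_rn_mono[of n2 "max n1 n2" W W] by auto
      thus "\<exists>n. bs (rn n W) W \<subseteq> a \<inter> b" by blast
    qed
  next
    case (UN K) thus ?case by blast
  next
    case (Basis s)
    then obtain a B where s: "s = bs a B" "a \<in> AR J A" "B \<in> R" by blast
    show ?case
    proof
      fix W assume W: "W \<in> s"
      hence WR: "W \<in> R" "leq W B" "rn (length a) W = a" using s by (auto simp: basic_iff)
      have "bs (rn (length a) W) W \<subseteq> s" using bs_mono[OF s(3) WR(1,2)] WR(3) s(1) by simp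
      thus "\<exists>n. bs (rn n W) W \<subseteq> s" by blast
    qed
  qed
qed

lemma nowhere_dense_null: assumes nd: "nowhere_dense_in T N" shows "ramsey_null J A N"
  unfolding ramsey_null_def
proof (intro allI impI)
  fix a B assume B: "B \<in> R" and ne: "bs a B \<noteq> {}"
  define cl where "cl = T closure_of N"
  define U where "U = topspace T - cl"
  have opU: "openin T U" unfolding U_def cl_def by (simp add: openin_diff)
  obtain C where C: "C \<in> bs a B" "bs a C \<subseteq> U \<or> bs a C \<inter> U = {}"
    using open_ramsey[OF ell_open[OF opU] B ne] by blast
  have Nsub: "N \<subseteq> cl" using nd closure_of_subset unfolding nowhere_dense_in_def cl_def by blast
  have CC: "C \<in> bs a C" using bs_self[OF C(1)] .
  have CR: "C \<in> R" using C(1) by (auto simp: basic_iff)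
  from C(2) show "\<exists>C\<in>bs a B. bs a C \<inter> N = {}"
  proof
    assume "bs a C \<subseteq> U" thus ?thesis using C(1) Nsub by (auto simp: U_def)
  next
    assume dis: "bs a C \<inter> U = {}"
    have "bs a C \<subseteq> cl" using dis bs_sub_R ell_topspace by (auto simp: U_def)
    moreover have "openin T (bs a C)" using basic_open bs_AR CC CR by blast
    ultimately have "bs a C \<subseteq> T interior_of cl" using interior_of_maximal by blast
    thus ?thesis using nd CC by (auto simp: nowhere_dense_in_def cl_def)
  qed
qed

lemma null_union2: assumes "ramsey_null J A N1" "ramsey_null J A N2" shows "ramsey_null J A (N1 \<union> N2)"
  unfolding ramsey_null_def
proof (intro allI impI)
  fix a B assume B: "B \<in> R" and ne: "bs a B \<noteq> {}"
  have "\<exists>C1\<in>bs a B. bs a C1 \<inter> N1 = {}" using assms(1) B ne unfolding ramsey_null_def by blast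
  then obtain C1 where C1: "C1 \<in> bs a B" "bs a C1 \<inter> N1 = {}" by blast
  have C1R: "C1 \<in> R" "leq C1 B" using C1 by (auto simp: basic_iff)
  have "\<exists>C2\<in>bs a C1. bs a C2 \<inter> N2 = {}" using assms(2) C1R bs_self[OF C1(1)] unfolding ramsey_null_def by blast
  then obtain C2 where C2: "C2 \<in> bs a C1" "bs a C2 \<inter> N2 = {}" by blast
  have C2R: "C2 \<in> R" "leq C2 C1" using C2 by (auto simp: basic_iff)
  have "C2 \<in> bs a B" using bs_mono[OF B C1R] C2 by blast
  moreover have "bs a C2 \<subseteq> bs a C1" using bs_mono[OF C1R(1) C2R] .
  ultimately show "\<exists>C\<in>bs a B. bs a C \<inter> (N1 \<union> N2) = {}" using C1 C2 by blast
qed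

lemma null_empty: "ramsey_null J A {}"
  unfolding ramsey_null_def using bs_self by blast

lemma null_fitsat: assumes N: "ramsey_null J A N" and Y: "Y \<in> R" and f: "fitsat b Y e"
  shows "\<exists>X\<in>R. leq X Y \<and> rn e X = rn e Y \<and> bs b X \<inter> N = {}"
proof -
  have "\<exists>C\<in>bs b Y. bs b C \<inter> N = {}" using N Y f unfolding ramsey_null_def fitsat_def by blast
  then obtain C where C: "C \<in> bs b Y" "bs b C \<inter> N = {}" by blast
  have CR: "C \<in> R" "leq C Y" using C by (auto simp: basic_iff)
  obtain X where "X \<in> R" "leq X Y" "rn e X = rn e Y" "bs b X \<subseteq> bs b C"
    using A3_2c[OF Y f CR] bs_self[OF C(1)] by blast
  thus ?thesis using C(2) by blast
qed

lemma null_finite: assumes N: "ramsey_null J A N" and X: "X \<in> R" and F: "finite F" and fF: "\<forall>b\<in>F. fitsat b X e"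
  shows "\<exists>X'\<in>R. leq X' X \<and> rn e X' = rn e X \<and> (\<forall>b\<in>F. bs b X' \<inter> N = {})"
  using F fF
proof (induction F rule: finite_induct)
  case empty thus ?case using X leR_refl by blast
next
  case (insert b F)
  then obtain X1 where X1: "X1 \<in> R" "leq X1 X" "rn e X1 = rn e X" "\<forall>b\<in>F. bs b X1 \<inter> N = {}"
    by blast
  have "fitsat b X1 e" using A3_1c[OF X _ X1(1,2,3)] insert by blast
  then obtain X2 where X2: "X2 \<in> R" "leq X2 X1" "rn e X2 = rn e X1" "bs b X2 \<inter> N = {}"
    using null_fitsat[OF N X1(1)] by blast
  have "\<forall>b\<in>F. bs b X2 \<inter> N = {}" using X1(4) bs_mono[OF X1(1) X2(1,2)] by blast
  moreover have "leq X2 X" using leR_trans X1 X2 X by blast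
  ultimately show ?case using X2 X1 by auto
qed

lemma sm_diff: assumes "strict_mono (f :: nat \<Rightarrow> nat)" "m \<le> n" shows "f m + (n - m) \<le> f n"
  using assms(2)
proof (induction n rule: dec_induct)
  case base thus ?case by simp
next
  case (step n)
  have "f n < f (Suc n)" using assms(1) strict_monoD by blast
  thus ?case using step by simp
qed

lemma null_countable_union: fixes NN :: "nat \<Rightarrow> seqR set" assumes NN: "\<And>i. ramsey_null J A (NN i)" shows "ramsey_null J A (\<Union>i. NN i)"
  unfolding ramsey_null_def
proof (intro allI impI)
  fix a B assume B: "B \<in> R" and ne: "bs a B \<noteq> {}"
  obtain d where f: "fitsat a B d" using fitsat_exists[OF B ne] by blast
  define NU where "NU i = (\<Union>j\<in>{..i::nat}. NN j)" for i
  have NUn: "ramsey_null J A (NU i)" for i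
  proof (induction i)
    case 0 thus ?case using NN by (simp add: NU_def)
  next
    case (Suc i)
    have "NU (Suc i) = NU i \<union> NN (Suc i)" by (auto simp: NU_def le_Suc_eq)
    thus ?case using null_union2 Suc NN by simp
  qed
  define H where "H i X = (if i = 0 then {a} else G (i - 1) a d X)" for i X
  define PP where "PP i X X' \<longleftrightarrow> X' \<in> R \<and> leq X' X \<and> rn (d + i) X' = rn (d + i) X \<and>
      (\<forall>b\<in>H i X. bs b X' \<inter> NU i = {})" for i X X'
  define stepf where "stepf i X = (SOME X'. PP i X X')" for i X
  have stepf: "PP i X (stepf i X)" if X: "X \<in> R" "leq X B" "rn d X = rn d B" for i X
  proof -
    have fin: "finite (H i X)" using G_finite[OF X(1)] by (simp add: H_def)
    have fH: "\<forall>b\<in>H i X. fitsat b X (d + i)"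
    proof
      fix b assume b: "b \<in> H i X"
      show "fitsat b X (d + i)"
      proof (cases "i = 0")
        case True
        hence "b = a" using b by (simp add: H_def)
        thus ?thesis using A3_1c[OF B f X] True by simp
      next
        case False
        hence bG: "b \<in> G (i - 1) a d X" using b by (simp add: H_def)
        hence "fitsat b X (Suc (d + (i - 1)))" using G_fitsat[OF X(1)] by blast
        moreover have "Suc (d + (i - 1)) = d + i" using False by simp
        ultimately show ?thesis by simp
      qed
    qed
    have "\<exists>X'. PP i X X'" using null_finite[OF NUn X(1) fin fH] unfolding PP_def by blast
    thus ?thesis unfolding stepf_def by (rule someI_ex)
  qed
  define Bs where "Bs = rec_nat B stepf"
  have Bs0: "Bs 0 = B" and BsS: "Bs (Suc i) = stepf i (Bs i)" for i by (simp_all add: Bs_def)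
  have inv: "Bs i \<in> R \<and> leq (Bs i) B \<and> rn d (Bs i) = rn d B" for i
  proof (induction i)
    case 0 thus ?case using Bs0 B leR_refl by simp
  next
    case (Suc i)
    have P: "PP i (Bs i) (Bs (Suc i))" using stepf Suc BsS by metis
    hence "Bs (Suc i) \<in> R" "leq (Bs (Suc i)) (Bs i)" "rn (d + i) (Bs (Suc i)) = rn (d + i) (Bs i)"
      by (auto simp: PP_def)
    moreover have "rn d (Bs (Suc i)) = rn d (Bs i)" using rn_eq_mono[OF calculation(3), of d] by simp
    moreover have "leq (Bs (Suc i)) B" using leR_trans[OF calculation(1) _ B calculation(2)] Suc by blast
    ultimately show ?case using Suc by simp
  qed
  have PPi: "PP i (Bs i) (Bs (Suc i))" for i using stepf inv BsS by metis
  obtain C where C: "C \<in> R" "\<forall>n. leq C (Bs n) \<and> rn (d + n) C = rn (d + n) (Bs n)"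
    using fusion[of Bs d] inv PPi by (auto simp: PP_def)
  have CB: "leq C B" using C(2) Bs0 by metis
  have rnd: "rn d C = rn d B" using C(2) Bs0 by (metis add_0_right)
  have fC: "fitsat a C d" using A3_1c[OF B f C(1) CB rnd] .
  obtain C' where C': "C' \<in> bs a C" using fC by (auto simp: fitsat_def)
  have C'R: "C' \<in> R" "leq C' C" using C' by (auto simp: basic_iff)
  have "C' \<in> bs a B" using bs_mono[OF B C(1) CB] C' by blast
  moreover have "bs a C' \<inter> (\<Union>i. NN i) = {}"
  proof (rule ccontr)
    assume "bs a C' \<inter> (\<Union>i. NN i) \<noteq> {}"
    then obtain W j where W: "W \<in> bs a C'" "W \<in> NN j" by blast
    have WR: "W \<in> R" "leq W C'" "rn (length a) W = a" using W by (auto simp: basic_iff)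
    have WC: "leq W C" using leR_trans[OF WR(1) C'R(1) C(1) WR(2) C'R(2)] .
    have WbC: "W \<in> bs a C" using WR WC by (simp add: basic_iff)
    define q where "q = length a + j"
    define b where "b = rn q W"
    obtain i where bi: "b \<in> H i (Bs i)" and ji: "j \<le> i"
    proof (cases "j = 0")
      case True
      hence "b = a" using WR by (simp add: b_def q_def)
      thus ?thesis using that[of 0] True by (simp add: H_def)
    next
      case False
      hence q: "length a < q" by (simp add: q_def)
      obtain ix where ix: "strict_mono ix" "\<And>k. subb k (W k) (C (ix k))" using leR_index[OF WR(1) C(1) WC] by blast
      define l where "l = ix (q - 1)"
      have l: "subb (q - 1) (W (q - 1)) (C l)" using ix by (simp add: l_def)
      have dl0: "d \<le> ix (length a)" using ext_block_ge[OF C(1) fC WbC ix(2)] .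
      have "ix (length a) + (q - 1 - length a) \<le> l" using sm_diff[OF ix(1), of "length a" "q - 1"] q by (simp add: l_def)
      hence dl: "d + (j - 1) \<le> l" using dl0 False by (simp add: q_def)
      define i where "i = Suc (l - d)"
      have bne: "b \<noteq> []" using q by (simp add: b_def) (metis not_less0 list.size(3) rn_length)
      have "last b = W (q - 1)" using last_rn[OF bne] by (simp add: b_def)
      hence "fst (last b) = fst (C l)" using l by (simp add: subb_def)
      also have "\<dots> = fst (Bs i (d + (i - 1)))"
      proof -
        have "\<forall>k<d + i. C k = Bs i k" using C(2) by (simp add: rn_eq_iff)
        moreover have "l < d + i" "l = d + (i - 1)" using dl by (auto simp: i_def)
        ultimately show ?thesis by simp
      qed
      finally have lastb: "fst (last b) = fst (Bs i (d + (i - 1)))" .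
      have "W \<in> bs a (Bs i)" using bs_mono[OF _ C(1)] inv C(2) WbC by blast
      hence "b \<in> Ext a (Bs i)" unfolding Ext_def b_def
        by (intro CollectI bexI[of _ W] exI[of _ q]) (auto simp: q_def)
      hence "b \<in> G (i - 1) a d (Bs i)" using lastb q by (simp add: G_def b_def)
      moreover have "j \<le> i" using dl by (simp add: i_def)
      ultimately show ?thesis using that[of i] by (simp add: H_def i_def)
    qed
    have "leq W (Bs (Suc i))" using leR_trans[OF WR(1) C(1) _ WC] inv C(2) by blast
    hence "W \<in> bs b (Bs (Suc i))" using WR(1) by (simp add: basic_iff b_def)
    moreover have "bs b (Bs (Suc i)) \<inter> NU i = {}" using PPi[of i] bi by (auto simp: PP_def)
    moreover have "W \<in> NU i" using W(2) ji by (auto simp: NU_def)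
    ultimately show False by blast
  qed
  ultimately show "\<exists>C\<in>bs a B. bs a C \<inter> (\<Union>i. NN i) = {}" by blast
qed

lemma null_get: "ramsey_null J A N \<Longrightarrow> B \<in> R \<Longrightarrow> bs a B \<noteq> {} \<Longrightarrow> \<exists>C\<in>bs a B. bs a C \<inter> N = {}"
  unfolding ramsey_null_def by blast

lemma null_subset: assumes "ramsey_null J A N" "X \<subseteq> N" shows "ramsey_null J A X"
  unfolding ramsey_null_def
proof (intro allI impI)
  fix a B assume "B \<in> R" "bs a B \<noteq> {}"
  then obtain C where "C \<in> bs a B" "bs a C \<inter> N = {}" using null_get[OF assms(1)] by blast
  thus "\<exists>C\<in>bs a B. bs a C \<inter> X = {}" using assms(2) by blast
qed

lemma meager_null: assumes XR: "X \<subseteq> R" and m: "meager_in T X" shows "ramsey_null J A X"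
proof -
  obtain F where F: "countable F" "\<forall>N\<in>F. nowhere_dense_in T N" "X \<subseteq> \<Union>F"
    using m by (auto simp: meager_in_def)
  have "ramsey_null J A (\<Union>F)"
  proof (cases "F = {}")
    case True thus ?thesis using null_empty by simp
  next
    case False
    have "\<Union>F = (\<Union>i. from_nat_into F i)" using range_from_nat_into[OF False F(1)] by simp
    moreover have "ramsey_null J A (from_nat_into F i)" for i
      using nowhere_dense_null F(2) from_nat_into[OF False] by blast
    ultimately show ?thesis using null_countable_union[of "from_nat_into F"] by simp
  qed
  thus ?thesis using F(3) null_subset by blast
qed

lemma baire_ramsey: assumes XR: "X \<subseteq> R" and bp: "baire_property_in T X" shows "ramsey_set J A X"
  unfolding ramsey_set_def
proof (intro allI impI)
  fix a B assume B: "B \<in> R" and ne: "bs a B \<noteq> {}"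
  obtain U where U: "openin T U" "meager_in T ((X - U) \<union> (U - X))" using bp by (auto simp: baire_property_in_def)
  have UR: "U \<subseteq> R" using openin_subset[OF U(1)] ell_topspace by simp
  have "ramsey_null J A ((X - U) \<union> (U - X))" using meager_null[OF _ U(2)] XR UR by blast
  then obtain C1 where C1: "C1 \<in> bs a B" "bs a C1 \<inter> ((X - U) \<union> (U - X)) = {}"
    using B ne null_get by blast
  have C1R: "C1 \<in> R" "leq C1 B" using C1 by (auto simp: basic_iff)
  obtain C2 where C2: "C2 \<in> bs a C1" "bs a C2 \<subseteq> U \<or> bs a C2 \<inter> U = {}"
    using open_ramsey[OF ell_open[OF U(1)] C1R(1)] bs_self[OF C1(1)] by blast
  have C2R: "C2 \<in> R" "leq C2 C1" using C2 by (auto simp: basic_iff)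
  have "C2 \<in> bs a B" using bs_mono[OF B C1R] C2 by blast
  moreover have sub: "bs a C2 \<subseteq> bs a C1" using bs_mono[OF C1R(1) C2R] .
  ultimately show "\<exists>C\<in>bs a B. bs a C \<subseteq> X \<or> bs a C \<inter> X = {}"
    using C2(2) C1(2) by blast
qed

end


context gs begin

lemma le_fin_iff: "le_fin J A a b \<longleftrightarrow> (\<exists>C\<in>R. \<exists>B\<in>R. leq C B \<and> rn (length a) C = a \<and> rn (length b) B = b \<and>
    (\<forall>k<length a. \<exists>l<length b. subb k (C k) (B l)))"
proof
  assume "le_fin J A a b"
  then obtain C B where CB: "C \<in> R" "B \<in> R" "leq C B" "a = rn (length a) C" "b = rn (length b) B"
    "fst ` set a \<subseteq> fst ` set b" by (auto simp: le_fin_def)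
  have "\<exists>l<length b. subb k (C k) (B l)" if k: "k < length a" for k
  proof -
    obtain l where l: "subb k (C k) (B l)" using CB(3) leR_iff by blast
    have "a ! k = C k" using k CB(4) by (metis rn_nth)
    hence "fst (C k) \<in> fst ` set b" using CB(6) k by (metis image_eqI nth_mem subsetD)
    then obtain l' where l': "l' < length b" "fst (C k) = fst (b ! l')" by (metis imageE in_set_conv_nth)
    have "b ! l' = B l'" using l'(1) CB(5) by (metis rn_nth)
    hence "fst (B l) = fst (B l')" using l l' by (simp add: subb_def)
    hence "l = l'" using RR_fst_inj[OF CB(2)] by blast
    thus ?thesis using l l' by blast
  qed
  thus "\<exists>C\<in>R. \<exists>B\<in>R. leq C B \<and> rn (length a) C = a \<and> rn (length b) B = b \<and>
    (\<forall>k<length a. \<exists>l<length b. subb k (C k) (B l))" using CB by metis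
next
  assume "\<exists>C\<in>R. \<exists>B\<in>R. leq C B \<and> rn (length a) C = a \<and> rn (length b) B = b \<and>
    (\<forall>k<length a. \<exists>l<length b. subb k (C k) (B l))"
  then obtain C B where CB: "C \<in> R" "B \<in> R" "leq C B" "rn (length a) C = a" "rn (length b) B = b"
    "\<forall>k<length a. \<exists>l<length b. subb k (C k) (B l)" by blast
  have "fst ` set a \<subseteq> fst ` set b"
  proof
    fix x assume "x \<in> fst ` set a"
    then obtain k where k: "k < length a" "x = fst (a ! k)" by (metis imageE in_set_conv_nth)
    obtain l where l: "l < length b" "subb k (C k) (B l)" using CB(6) k by blast
    have "a ! k = C k" "b ! l = B l" using k l CB(4,5) by (metis rn_nth)+
    hence "x = fst (b ! l)" using k l by (simp add: subb_def)
    thus "x \<in> fst ` set b" using l by auto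
  qed
  thus "le_fin J A a b" unfolding le_fin_def using CB by metis
qed

lemma le_fin_rn: assumes B: "B \<in> R"
  shows "le_fin J A a (rn n B) \<longleftrightarrow> (\<exists>Z\<in>bs a B. \<forall>k<length a. \<exists>l<n. subb k (Z k) (B l))"
proof
  assume "le_fin J A a (rn n B)"
  then obtain C B' where CB: "C \<in> R" "B' \<in> R" "leq C B'" "rn (length a) C = a" "rn n B' = rn n B"
    "\<forall>k<length a. \<exists>l<n. subb k (C k) (B' l)" unfolding le_fin_iff by auto
  have "\<forall>k<length a. \<exists>l<n. subb k (C k) (B l)" using CB(5,6) unfolding rn_eq_iff by metis
  then obtain Z where Z: "Z \<in> R" "rn (length a) Z = rn (length a) C" "leq Z B"
    using ext_lemma[OF B CB(1)] by blast
  have "Z \<in> bs a B" using Z CB(4) by (simp add: basic_iff)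
  moreover have "\<forall>k<length a. Z k = C k" using Z(2) by (simp add: rn_eq_iff)
  ultimately show "\<exists>Z\<in>bs a B. \<forall>k<length a. \<exists>l<n. subb k (Z k) (B l)"
    using \<open>\<forall>k<length a. \<exists>l<n. subb k (C k) (B l)\<close> by metis
next
  assume "\<exists>Z\<in>bs a B. \<forall>k<length a. \<exists>l<n. subb k (Z k) (B l)"
  then obtain Z where Z: "Z \<in> bs a B" "\<forall>k<length a. \<exists>l<n. subb k (Z k) (B l)" by blast
  have "Z \<in> R" "leq Z B" "rn (length a) Z = a" using Z by (auto simp: basic_iff)
  thus "le_fin J A a (rn n B)" unfolding le_fin_iff using B Z(2) by auto
qed

lemma le_fin_fitsat: assumes B: "B \<in> R" and f: "fitsat a B e"
  shows "le_fin J A a (rn n B) \<longleftrightarrow> e \<le> n"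
proof
  assume "le_fin J A a (rn n B)"
  then obtain Z where Z: "Z \<in> bs a B" "\<forall>k<length a. \<exists>l<n. subb k (Z k) (B l)" using le_fin_rn[OF B] by blast
  show "e \<le> n"
  proof (cases "a = []")
    case True thus ?thesis using f by (simp add: fitsat_def)
  next
    case False
    have "length a - 1 < length a" using False by simp
    then obtain l where l: "l < n" "subb (length a - 1) (Z (length a - 1)) (B l)" using Z(2) by blast
    have "last a = Z (length a - 1)" using last_rn[OF False] Z(1) by (simp add: basic_iff)
    hence "fst (B l) = fst (B (e - 1))" using l f False by (simp add: fitsat_def subb_def)
    hence "l = e - 1" using RR_fst_inj[OF B] by blast
    thus ?thesis using l f False by (simp add: fitsat_def)
  qed
next
  assume en: "e \<le> n"
  obtain Z where Z: "Z \<in> bs a B" using f by (auto simp: fitsat_def)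
  have "\<forall>k<length a. \<exists>l<n. subb k (Z k) (B l)" using fits_blocks[OF B Z f] en by (meson less_le_trans)
  thus "le_fin J A a (rn n B)" using le_fin_rn[OF B] Z by blast
qed

lemma depth_eq: assumes B: "B \<in> R" and f: "fitsat a B e" shows "depth J A B a = e"
  unfolding depth_def using le_fin_fitsat[OF B f] by (intro Least_equality) auto

lemma depth_finite_iff: assumes B: "B \<in> R" shows "depth_finite J A B a \<longleftrightarrow> bs a B \<noteq> {}"
proof
  assume "depth_finite J A B a"
  then obtain n where "le_fin J A a (rn n B)" by (auto simp: depth_finite_def)
  thus "bs a B \<noteq> {}" using le_fin_rn[OF B] by blast
next
  assume "bs a B \<noteq> {}"
  then obtain e where f: "fitsat a B e" using fitsat_exists[OF B] by blast
  thus "depth_finite J A B a" using le_fin_fitsat[OF B f] by (auto simp: depth_finite_def)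
qed

lemma basic_rn: "X \<in> bs (rn e B) B \<longleftrightarrow> X \<in> R \<and> leq X B \<and> rn e X = rn e B"
  by (simp add: basic_iff)

lemma axA1: "axiom_A1 J A"
proof -
  have 1: "\<forall>X\<in>R. rn 0 X = []" by (simp add: rn_def)
  have 2: "\<exists>n. rn n X \<noteq> rn n Y" if ne: "X \<noteq> Y" for X Y :: seqR
  proof -
    obtain k where "X k \<noteq> Y k" using ne by (auto simp: fun_eq_iff)
    hence "rn (Suc k) X \<noteq> rn (Suc k) Y" by (auto simp: rn_eq_iff)
    thus ?thesis by blast
  qed
  have 3: "n = m \<and> (\<forall>i<n. rn i X = rn i Y)" if h: "rn n X = rn m Y" for X Y :: seqR and n m
  proof -
    have nm: "n = m" using h by (metis rn_length)
    thus ?thesis using h rn_eq_mono[of n X Y] by auto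
  qed
  show ?thesis unfolding axiom_A1_def
  proof (intro conjI)
    show "\<forall>X\<in>R. rn 0 X = []" by (rule 1)
    show "\<forall>X\<in>R. \<forall>Y\<in>R. X \<noteq> Y \<longrightarrow> (\<exists>n. rn n X \<noteq> rn n Y)" using 2 by blast
    show "\<forall>X\<in>R. \<forall>Y\<in>R. \<forall>n m. rn n X = rn m Y \<longrightarrow> n = m \<and> (\<forall>i<n. rn i X = rn i Y)"
      using 3 by blast
  qed
qed

lemma AR_RR: "a \<in> AR J A \<Longrightarrow> \<exists>B\<in>R. a = rn (length a) B"
  unfolding AR_def ARn_def by auto

lemma axA2: "axiom_A2 J A"
  unfolding axiom_A2_def
proof (intro conjI ballI allI impI)
  fix a assume "a \<in> AR J A"
  then obtain B where B: "B \<in> R" "a = rn (length a) B" using AR_RR by blast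
  show "le_fin J A a a" unfolding le_fin_def using B leR_refl by blast
next
  fix a b c assume ab: "le_fin J A a b" and bc: "le_fin J A b c"
  obtain C1 B1 where 1: "C1 \<in> R" "B1 \<in> R" "leq C1 B1" "rn (length a) C1 = a" "rn (length b) B1 = b"
    "\<forall>k<length a. \<exists>l<length b. subb k (C1 k) (B1 l)" using ab unfolding le_fin_iff by blast
  obtain C2 B2 where 2: "C2 \<in> R" "B2 \<in> R" "leq C2 B2" "rn (length b) C2 = b" "rn (length c) B2 = c"
    "\<forall>k<length b. \<exists>l<length c. subb k (C2 k) (B2 l)" using bc unfolding le_fin_iff by blast
  have sub: "\<forall>k<length a. \<exists>l<length c. subb k (C1 k) (B2 l)"
  proof (intro allI impI)
    fix k assume k: "k < length a"
    obtain l where l: "l < length b" "subb k (C1 k) (B1 l)" using 1(6) k by blast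
    have kl: "k \<le> l" using subb_index_ge[OF 1(1,2,3) l(2)] .
    have "B1 l = C2 l" using 1(5) 2(4) l(1) by (metis rn_nth)
    then obtain l' where "l' < length c" "subb l (B1 l) (B2 l')" using 2(6) l(1) by auto
    thus "\<exists>l<length c. subb k (C1 k) (B2 l)" using subb_trans[OF l(2) _ kl] by blast
  qed
  obtain C where C: "C \<in> R" "rn (length a) C = rn (length a) C1" "leq C B2"
    using ext_lemma[OF 2(2) 1(1), of "length a" "length c"] sub
    by (metis (no_types, lifting) less_imp_le_nat)
  have "\<forall>k<length a. C k = C1 k" using C(2) by (simp add: rn_eq_iff)
  thus "le_fin J A a c" unfolding le_fin_iff using C 1(4) 2(2,5) sub by (intro bexI[of _ C] bexI[of _ B2]) auto
next
  fix b assume "b \<in> AR J A"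
  define M where "M = Max (insert 0 (fst ` set b))"
  have Mge: "x \<in> fst ` set b \<Longrightarrow> x \<le> M" for x by (simp add: M_def)
  have "{a. le_fin J A a b} \<subseteq> {a :: block list. length a \<le> Suc M \<and> (\<forall>k<length a. valid k (a!k) \<and> k \<le> fst (a!k) \<and> fst (a!k) \<le> M)}"
  proof (clarify)
    fix a assume "le_fin J A a b"
    then obtain C B where CB: "C \<in> R" "B \<in> R" "leq C B" "a = rn (length a) C" "b = rn (length b) B"
      "fst ` set a \<subseteq> fst ` set b" by (auto simp: le_fin_def)
    have smC: "strict_mono (\<lambda>k. fst (C k))" using CB(1) by (simp add: RR_iff)
    have ak: "a ! k = C k" if "k < length a" for k using that CB(4) by (metis rn_nth)
    have le: "fst (a ! k) \<le> M" if "k < length a" for k using Mge CB(6) that by (meson image_eqI nth_mem subsetD)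
    have ge: "k \<le> fst (a ! k)" if "k < length a" for k using sm_ge[OF smC, of k] ak[OF that] by simp
    have "length a \<le> Suc M"
    proof (cases "a = []")
      case False
      hence "length a - 1 \<le> M" using le[of "length a - 1"] ge[of "length a - 1"] by auto
      thus ?thesis by simp
    qed simp
    moreover have "\<forall>k<length a. valid k (a!k) \<and> k \<le> fst (a!k) \<and> fst (a!k) \<le> M"
      using ak le ge CB(1) by (simp add: RR_iff)
    ultimately show "length a \<le> Suc M \<and> (\<forall>k<length a. valid k (a!k) \<and> k \<le> fst (a!k) \<and> fst (a!k) \<le> M)" by blast
  qed
  thus "finite {a. le_fin J A a b}" using finite_blocklists finite_subset by blast
next
  fix X Y assume X: "X \<in> R" and Y: "Y \<in> R"
  show "leq X Y \<longleftrightarrow> (\<forall>n. \<exists>m. le_fin J A (rn n X) (rn m Y))"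
  proof
    assume le: "leq X Y"
    obtain ix where ix: "strict_mono ix" "\<And>k. subb k (X k) (Y (ix k))" using leR_index[OF X Y le] by blast
    show "\<forall>n. \<exists>m. le_fin J A (rn n X) (rn m Y)"
    proof
      fix n
      have "\<forall>k<n. \<exists>l<ix n. subb k (X k) (Y l)" using ix strict_monoD by blast
      hence "le_fin J A (rn n X) (rn (ix n) Y)" unfolding le_fin_iff using X Y le by auto
      thus "\<exists>m. le_fin J A (rn n X) (rn m Y)" by blast
    qed
  next
    assume h: "\<forall>n. \<exists>m. le_fin J A (rn n X) (rn m Y)"
    show "leq X Y"
      unfolding leR_iff
    proof
      fix k
      obtain m where "le_fin J A (rn (Suc k) X) (rn m Y)" using h by blast
      then obtain C B where CB: "rn (Suc k) C = rn (Suc k) X" "rn m B = rn m Y"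
        "\<forall>k'<Suc k. \<exists>l<m. subb k' (C k') (B l)" unfolding le_fin_iff by auto
      obtain l where "l < m" "subb k (C k) (B l)" using CB(3) by blast
      moreover have "C k = X k" using CB(1) by (simp add: rn_eq_iff)
      moreover have "B l = Y l" using CB(2) \<open>l < m\<close> by (simp add: rn_eq_iff)
      ultimately show "\<exists>l. subb k (X k) (Y l)" by auto
    qed
  qed
next
  fix a b c assume pre: "prefix a b" and bc: "le_fin J A b c"
  obtain C B where CB: "C \<in> R" "B \<in> R" "leq C B" "rn (length b) C = b" "rn (length c) B = c"
    "\<forall>k<length b. \<exists>l<length c. subb k (C k) (B l)" using bc unfolding le_fin_iff by blast
  have la: "length a \<le> length b" using pre by (simp add: prefix_length_le)
  have "a = take (length a) b" using pre by (metis append_eq_conv_conj prefixE)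
  hence "rn (length a) C = a" using take_rn[OF la, of C] CB(4) by simp
  hence "le_fin J A a c" unfolding le_fin_iff using CB la by (meson less_le_trans)
  thus "\<exists>d. prefix d c \<and> le_fin J A a d" by blast
qed

lemma axA3: "axiom_A3 J A"
  unfolding axiom_A3_def
proof (intro conjI ballI allI impI)
  fix a B X assume B: "B \<in> R" and df: "depth_finite J A B a" and X: "X \<in> bs (rn (depth J A B a) B) B"
  obtain e where f: "fitsat a B e" using fitsat_exists[OF B] depth_finite_iff[OF B] df by blast
  have de: "depth J A B a = e" using depth_eq[OF B f] .
  have "X \<in> R" "leq X B" "rn e X = rn e B" using X de basic_rn by auto
  thus "bs a X \<noteq> {}" using A3_1c[OF B f] by (simp add: fitsat_def)
next
  fix a X B assume X: "X \<in> R" and B: "B \<in> R" and le: "leq X B" and ne: "bs a X \<noteq> {}"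
  have "bs a B \<noteq> {}" using bs_mono[OF B X le] ne by blast
  then obtain e where f: "fitsat a B e" using fitsat_exists[OF B] by blast
  have de: "depth J A B a = e" using depth_eq[OF B f] .
  obtain X' where X': "X' \<in> R" "leq X' B" "rn e X' = rn e B" "fitsat a X' e" "bs a X' \<subseteq> bs a X"
    using A3_2c[OF B f X le ne] by blast
  thus "\<exists>X'\<in>bs (rn (depth J A B a) B) B. bs a X' \<noteq> {} \<and> bs a X' \<subseteq> bs a X"
    using de basic_rn by (auto simp: fitsat_def)
qed

lemma axA4: "axiom_A4 J A"
  unfolding axiom_A4_def
proof (intro ballI allI impI)
  fix a B Ob assume B: "B \<in> R" and df: "depth_finite J A B a"
  obtain e where f: "fitsat a B e" using fitsat_exists[OF B] depth_finite_iff[OF B] df by blast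
  have de: "depth J A B a = e" using depth_eq[OF B f] .
  obtain X where X: "X \<in> R" "leq X B" "rn e X = rn e B"
    "(\<forall>Z\<in>bs a X. rn (Suc (length a)) Z \<in> Ob) \<or> (\<forall>Z\<in>bs a X. rn (Suc (length a)) Z \<notin> Ob)"
    using A4c[OF B f, of "\<lambda>x. x \<in> Ob"] by blast
  thus "\<exists>X\<in>bs (rn (depth J A B a) B) B.
            rn (Suc (length a)) ` bs a X \<subseteq> Ob \<or> rn (Suc (length a)) ` bs a X \<subseteq> - Ob"
    using de basic_rn by (intro bexI[of _ X]) auto
qed

lemma closed_R: "closedin (product_topology (\<lambda>_::nat. discrete_topology (AR J A)) UNIV) ((\<lambda>B n. rn n B) ` R)"
  (is "closedin ?P ?S")
proof -
  have top: "topspace ?P = {f. \<forall>n. f n \<in> AR J A}" by (auto simp: PiE_def extensional_def)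
  have inAR: "rn n B \<in> AR J A" if "B \<in> R" for n B unfolding AR_def ARn_def using that by blast
  have Ssub: "?S \<subseteq> topspace ?P" using inAR top by auto
  have "\<forall>f\<in>topspace ?P - ?S. \<exists>T. openin ?P T \<and> f \<in> T \<and> T \<subseteq> topspace ?P - ?S"
  proof
    fix f assume f: "f \<in> topspace ?P - ?S"
    have ex: "\<exists>n m. \<not> (\<exists>B\<in>R. rn n B = f n \<and> rn m B = f m)"
    proof (rule ccontr)
      assume "\<not> ?thesis"
      hence all: "\<forall>n m. \<exists>B\<in>R. rn n B = f n \<and> rn m B = f m" by blast
      have len: "length (f n) = n" for n using all by (metis rn_length)
      have tk: "take n (f m) = f n" if "n \<le> m" for n m
        using all take_rn[OF that] by metis
      define B where "B k = f (Suc k) ! k" for k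
      have fB: "f n ! k = B k" if "k < n" for n k
      proof -
        have "take (Suc k) (f n) = f (Suc k)" using tk that by simp
        hence "f (Suc k) ! k = f n ! k" by (metis lessI nth_take)
        thus ?thesis by (simp add: B_def)
      qed
      have "B \<in> R"
        unfolding RR_iff
      proof
        have "fst (B k) < fst (B (Suc k))" for k
        proof -
          obtain B' where B': "B' \<in> R" "rn (Suc (Suc k)) B' = f (Suc (Suc k))" using all by blast
          have "B k = B' k" "B (Suc k) = B' (Suc k)" using fB[of k "Suc (Suc k)"] fB[of "Suc k" "Suc (Suc k)"] B'(2)
            by (metis lessI less_SucI rn_nth)+
          thus ?thesis using RR_fst_mono[OF B'(1)] by simp
        qed
        thus "strict_mono (\<lambda>k. fst (B k))" by (simp add: strict_mono_Suc_iff)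
        show "\<forall>k. valid k (B k)"
        proof
          fix k
          obtain B' where B': "B' \<in> R" "rn (Suc k) B' = f (Suc k)" using all by blast
          have "B k = B' k" using B'(2) by (metis B_def lessI rn_nth)
          thus "valid k (B k)" using B'(1) by (simp add: RR_iff)
        qed
      qed
      moreover have "(\<lambda>n. rn n B) = f"
      proof
        fix n show "rn n B = f n" using len fB by (intro nth_equalityI) auto
      qed
      ultimately show False using f by blast
    qed
    then obtain n m where nm: "\<not> (\<exists>B\<in>R. rn n B = f n \<and> rn m B = f m)" by blast
    define V where "V = {g \<in> topspace ?P. g n \<in> {f n}} \<inter> {g \<in> topspace ?P. g m \<in> {f m}}"
    have "openin ?P {g \<in> topspace ?P. g i \<in> {f i}}" for i
    proof (rule openin_continuous_map_preimage)
      show "continuous_map ?P (discrete_topology (AR J A)) (\<lambda>x. x i)"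
        using continuous_map_product_projection[of i UNIV "\<lambda>_. discrete_topology (AR J A)"] by simp
      show "openin (discrete_topology (AR J A)) {f i}" using f top by auto
    qed
    hence "openin ?P V" unfolding V_def by blast
    moreover have "f \<in> V" using f by (auto simp: V_def)
    moreover have "V \<subseteq> topspace ?P - ?S" using nm by (auto simp: V_def)
    ultimately show "\<exists>T. openin ?P T \<and> f \<in> T \<and> T \<subseteq> topspace ?P - ?S" by blast
  qed
  hence "openin ?P (topspace ?P - ?S)" by (rule openin_subopen[THEN iffD2])
  thus ?thesis using Ssub by (simp add: closedin_def)
qed

end


theorem mainTheorem2:
  fixes J :: enat
    and I :: "nat \<Rightarrow> nat set"
    and ar :: "nat \<Rightarrow> nat \<Rightarrow> nat"
    and K :: "nat \<Rightarrow> ostr set"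
    and A :: "nat \<Rightarrow> nat \<Rightarrow> ostr"
  assumes "1 \<le> J"
    and "\<And>j. enat j < J \<Longrightarrow> fraisse_class (I j) (ar j) (K j)"
    and "\<And>j. enat j < J \<Longrightarrow> ramsey_property (K j)"
    and "generating_seq J K A"
  shows "closedin (product_topology (\<lambda>_::nat. discrete_topology (AR J A)) UNIV)
            ((\<lambda>B n. rn n B) ` RR J A)
       \<and> axiom_A1 J A \<and> axiom_A2 J A \<and> axiom_A3 J A \<and> axiom_A4 J A
       \<and> (\<forall>X. X \<subseteq> RR J A \<longrightarrow> baire_property_in (ellentuck J A) X \<longrightarrow> ramsey_set J A X)
       \<and> (\<forall>X. X \<subseteq> RR J A \<longrightarrow> meager_in (ellentuck J A) X \<longrightarrow> ramsey_null J A X)"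
proof -
  have Jlt: "enat j < J" if "j < Jk J k" for j k
    using that by (cases J) (auto simp: Jk_def)
  have gsq: "\<forall>k. \<forall>j<Jk J k. A k j \<in> K j" "\<forall>k. \<forall>j<Jk J k. substructure (A k j) (A (Suc k) j)"
    "\<forall>k m. k < m \<longrightarrow> (\<exists>n>m. arrow (Jk J k) (A n) (A m) (A k))"
    using assms(4) unfolding generating_seq_def by blast+
  have LA: "wf_str (A k j) \<and> finite (univ (A k j))" if j: "j < Jk J k" for k j
  proof -
    have "fraisse_class (I j) (ar j) (K j)" using assms(2)[OF Jlt[OF j]] .
    hence "\<forall>B\<in>K j. is_Lstr (I j) (ar j) B \<and> finite (univ B)" by (simp add: fraisse_class_def)
    thus ?thesis using gsq(1) j by (auto simp: is_Lstr_def)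
  qed
  interpret gs J A
  proof
    fix k j assume "j < Jk J k"
    thus "wf_str (A k j)" "finite (univ (A k j))" "substructure (A k j) (A (Suc k) j)"
      using LA gsq(2) by auto
  next
    fix k m :: nat assume "k < m"
    thus "\<exists>n>m. arrow (Jk J k) (A n) (A m) (A k)" using gsq(3) by blast
  qed
  show ?thesis using closed_R axA1 axA2 axA3 axA4 baire_ramsey meager_null by blast
qed


end
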